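(* Let $\mathcal{H}$ be a real Hilbert space, let $r\geq 1$, and let $A_i:\mathcal{H}\rightrightarrows\mathcal{H}$ be maximally monotone operators for $i=1,\ldots,r$. Let $\gamma>0$ and let $(\lambda_n)_{n=0}^\infty$ be a sequence in $[0,1]$ with $\sum_{n\geq0}\lambda_n(1-\lambda_n)=+\infty$. Let $\beta\in{]0,1[}$ and suppose $q\in\operatorname{ran}\left(\operatorname{Id}+\frac{\gamma}{2r(1-\beta)}\sum_{i=1}^rA_i\right)$. Given $x_{1,0},\ldots,x_{r,0}\in\mathcal{H}$, define for $n=0,1,2,\ldots$ \[ p_n=\frac{1}{r}\sum_{i=1}^r x_{i,n},\qquad x_{i,n+1}=(1-\lambda_n)x_{i,n}+\lambda_n\left(2\beta J_{(\gamma(A_i)_{-q})}-\operatorname{Id}\right)\left(2\beta p_n-x_{i,n}\right),\quad i=1,\ldots,r. \] Then: (i) $(x_{i,n+1}-x_{i,n})_{n=0}^\infty$ converges strongly to $0$ for all $i$; (ii) for each $i$, $(x_{i,n})_{n=0}^\infty$ converges weakly to some $x_i^\star\in\mathcal{H}$, and $q+\frac{1}{r}\sum_{i=1}^r x_i^\star=J_{\frac{\gamma}{2r(1-\beta)}\sum_{i=1}^rA_i}(q)$; (iii) $(q+p_n)_{n=0}^\infty$ converges strongly to $J_{\frac{\gamma}{2r(1-\beta)}\sum_{i=1}^rA_i}(q)$.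
   Context: For an operator $T:\mathcal{H}\rightrightarrows\mathcal{H}$, the resolvent is $J_T:=(\operatorname{Id}+T)^{-1}$; for maximally monotone $T$ it is single-valued with full domain. For $w\in\mathcal{H}$, the inner $w$-perturbation is $T_w(x):=T(x-w)$; thus $\gamma(A_i)_{-q}$ denotes $x\mapsto\gamma A_i(x+q)$. $\operatorname{ran}$ denotes the range. *)

theory Defs
  imports "HOL-Analysis.Analysis"
begin

text \<open>Set-valued operators on a real Hilbert space are modelled as functions 'a \<Rightarrow> 'a set;
  the graph of T is the set of pairs (x,u) with u \<in> T x.\<close>

definition monotone_op :: "('a::real_inner \<Rightarrow> 'a set) \<Rightarrow> bool" where
  "monotone_op T \<longleftrightarrow> (\<forall>x y u v. u \<in> T x \<longrightarrow> v \<in> T y \<longrightarrow> 0 \<le> (x - y) \<bullet> (u - v))"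

definition maximal_monotone :: "('a::real_inner \<Rightarrow> 'a set) \<Rightarrow> bool" where
  "maximal_monotone T \<longleftrightarrow> monotone_op T \<and>
     (\<forall>S. monotone_op S \<and> (\<forall>x. T x \<subseteq> S x) \<longrightarrow> S = T)"

text \<open>Resolvent J_T = (Id + T)^{-1}, evaluated at x (single-valued where used).\<close>
definition resolvent :: "('a::real_inner \<Rightarrow> 'a set) \<Rightarrow> 'a \<Rightarrow> 'a" where
  "resolvent T x = (THE y. x - y \<in> T y)"

definition ran_id_plus :: "('a::real_inner \<Rightarrow> 'a set) \<Rightarrow> 'a set" where
  "ran_id_plus T = {y + u | y u. u \<in> T y}"

definition scale_op :: "real \<Rightarrow> ('a::real_inner \<Rightarrow> 'a set) \<Rightarrow> 'a \<Rightarrow> 'a set" where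
  "scale_op c T x = (\<lambda>u. c *\<^sub>R u) ` T x"

definition perturb_op :: "'a \<Rightarrow> ('a::real_inner \<Rightarrow> 'a set) \<Rightarrow> 'a \<Rightarrow> 'a set" where
  "perturb_op w T x = T (x - w)"

definition sum_op :: "nat \<Rightarrow> (nat \<Rightarrow> 'a::real_inner \<Rightarrow> 'a set) \<Rightarrow> 'a \<Rightarrow> 'a set" where
  "sum_op r A x = {(\<Sum>i<r. u i) | u. \<forall>i<r. u i \<in> A i x}"

definition weak_conv :: "(nat \<Rightarrow> 'a::real_inner) \<Rightarrow> 'a \<Rightarrow> bool" where
  "weak_conv x L \<longleftrightarrow> (\<forall>y. (\<lambda>n. x n \<bullet> y) \<longlonglongrightarrow> L \<bullet> y)"

end

theory Submission
  imports Defs "HOL-Library.Diagonal_Subsequence"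
begin

lemma min_seq:
  fixes f :: "'b::real_vector \<Rightarrow> real" and g :: "'b \<Rightarrow> 'a::{real_normed_vector,complete_space}"
  assumes C: "convex C" "C \<noteq> {}" and lb: "\<And>u. u \<in> C \<Longrightarrow> b \<le> f u"
    and mid: "\<And>u v. u \<in> C \<Longrightarrow> v \<in> C \<Longrightarrow>
       f ((1/2) *\<^sub>R u + (1/2) *\<^sub>R v) \<le> (f u + f v) / 2 - \<kappa> * (norm (g u - g v))\<^sup>2"
    and k: "\<kappa> > 0"
  obtains s where "\<And>n. s n \<in> C" "(\<lambda>n. f (s n)) \<longlonglongrightarrow> (INF u\<in>C. f u)"
     "convergent (\<lambda>n. g (s n))" "\<And>u. u \<in> C \<Longrightarrow> (INF u\<in>C. f u) \<le> f u"
proof -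
  define \<eta> where "\<eta> = (INF u\<in>C. f u)"
  have bdd: "bdd_below (f ` C)" using lb by (rule bdd_belowI2)
  have low: "\<And>u. u \<in> C \<Longrightarrow> \<eta> \<le> f u" unfolding \<eta>_def using bdd by (simp add: cINF_lower)
  have "\<forall>n. \<exists>u\<in>C. f u < \<eta> + 1 / (real n + 1)"
  proof
    fix n
    have "\<eta> < \<eta> + 1 / (real n + 1)" by simp
    then show "\<exists>u\<in>C. f u < \<eta> + 1 / (real n + 1)"
      unfolding \<eta>_def using cInf_less_iff[of "f ` C" "\<eta> + 1 / (real n + 1)"] bdd C(2) by (auto simp: \<eta>_def)
  qed
  then obtain s where s: "\<And>n. s n \<in> C" "\<And>n. f (s n) < \<eta> + 1 / (real n + 1)" by metis
  have lim: "(\<lambda>n. f (s n)) \<longlonglongrightarrow> \<eta>"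
  proof (rule real_tendsto_sandwich[where f="\<lambda>n. \<eta>" and h="\<lambda>n. \<eta> + 1 / (real n + 1)"])
    show "\<forall>\<^sub>F n in sequentially. \<eta> \<le> f (s n)" using low s by auto
    show "\<forall>\<^sub>F n in sequentially. f (s n) \<le> \<eta> + 1 / (real n + 1)" using s(2) by (simp add: less_imp_le)
    show "(\<lambda>n. \<eta>) \<longlonglongrightarrow> \<eta>" by simp
    have "(\<lambda>n. 1 / (real n + 1)) \<longlonglongrightarrow> 0" using LIMSEQ_inverse_real_of_nat
      by (simp add: inverse_eq_divide add.commute)
    then show "(\<lambda>n. \<eta> + 1 / (real n + 1)) \<longlonglongrightarrow> \<eta>" using tendsto_add[of "\<lambda>n. \<eta>" \<eta> _ "\<lambda>n. 1 / (real n + 1)" 0] by simp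
  qed
  have "Cauchy (\<lambda>n. g (s n))"
  proof (rule metric_CauchyI)
    fix e :: real assume e: "e > 0"
    obtain N :: nat where N: "1 / (real N + 1) < \<kappa> * e\<^sup>2"
    proof -
      have "\<kappa> * e\<^sup>2 > 0" using k e by simp
      then obtain N where "inverse (real (Suc N)) < \<kappa> * e\<^sup>2" using reals_Archimedean by blast
      then show ?thesis using that[of N] by (simp add: inverse_eq_divide add.commute)
    qed
    show "\<exists>M. \<forall>m\<ge>M. \<forall>n\<ge>M. dist (g (s m)) (g (s n)) < e"
    proof (intro exI allI impI)
      fix m n assume mn: "N \<le> m" "N \<le> n"
      have "1 / (real m + 1) \<le> 1 / (real N + 1)" using mn by (simp add: frac_le)
      moreover have "1 / (real n + 1) \<le> 1 / (real N + 1)" using mn by (simp add: frac_le)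
      moreover have mC: "(1/2) *\<^sub>R s m + (1/2) *\<^sub>R s n \<in> C" using convexD[OF C(1) s(1) s(1)] by simp
      moreover note low[OF mC]
      ultimately have A: "\<kappa> * (norm (g (s m) - g (s n)))\<^sup>2 \<le> (f (s m) + f (s n)) / 2 - \<eta>"
        using mid[OF s(1) s(1), of m n] by argo
      have B: "(f (s m) + f (s n)) / 2 - \<eta> < 1 / (real N + 1)"
        using s(2)[of m] s(2)[of n] \<open>1 / (real m + 1) \<le> 1 / (real N + 1)\<close> \<open>1 / (real n + 1) \<le> 1 / (real N + 1)\<close> by argo
      have "\<kappa> * (norm (g (s m) - g (s n)))\<^sup>2 < \<kappa> * e\<^sup>2" using A B N by linarith
      then have "(norm (g (s m) - g (s n)))\<^sup>2 < e\<^sup>2" using k by simp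
      then show "dist (g (s m)) (g (s n)) < e" using e by (simp add: dist_norm power_less_imp_less_base)
    qed
  qed
  then have "convergent (\<lambda>n. g (s n))" by (simp add: Cauchy_convergent_iff)
  then show ?thesis using that s(1) lim low unfolding \<eta>_def by blast
qed

lemma km_id:
  fixes a b :: "'a::real_inner"
  shows "(norm ((1 - t) *\<^sub>R a + t *\<^sub>R b))\<^sup>2 = (1-t) * (norm a)\<^sup>2 + t * (norm b)\<^sup>2 - t*(1-t) * (norm (a - b))\<^sup>2"
  unfolding power2_norm_eq_inner by (simp add: inner_simps algebra_simps)

lemma half_id:
  fixes a b :: "'a::real_inner"
  shows "(norm ((1/2) *\<^sub>R a + (1/2) *\<^sub>R b))\<^sup>2 = (norm a)\<^sup>2/2 + (norm b)\<^sup>2/2 - (norm (a - b))\<^sup>2/4"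
  using km_id[of "1/2" a b] by simp

lemma quad_zero:
  fixes a b :: real
  assumes "b \<ge> 0" "\<And>t. 0 \<le> a * t + b * t\<^sup>2"
  shows "a = 0"
proof (rule ccontr)
  assume "a \<noteq> 0"
  define t where "t = - a / (b + 1)"
  have e1: "a + b * t = a / (b+1)" using assms(1) unfolding t_def by (simp add: field_simps)
  have "a * t + b * t\<^sup>2 = t * (a + b * t)" by (simp add: power2_eq_square algebra_simps)
  also have "\<dots> = t * (a / (b+1))" using e1 by simp
  also have "\<dots> = - a\<^sup>2 / (b+1)\<^sup>2" unfolding t_def by (simp add: power2_eq_square)
  also have "\<dots> < 0" using \<open>a \<noteq> 0\<close> assms(1) by (simp add: divide_pos_pos)
  finally show False using assms(2)[of t] by simp
qed

lemma proj_span: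
  fixes y :: "'a::{real_inner,complete_space}"
  obtains v s where "\<And>n. s n \<in> span S" "s \<longlonglongrightarrow> v" "\<And>w. w \<in> span S \<Longrightarrow> (y - v) \<bullet> w = 0"
proof -
  define f where "f u = (norm (y - u))\<^sup>2" for u
  have mid: "f ((1/2) *\<^sub>R u + (1/2) *\<^sub>R v) \<le> (f u + f v) / 2 - (1/4) * (norm (id u - id v))\<^sup>2" for u v
  proof -
    have yy: "(1/2) *\<^sub>R y + (1/2) *\<^sub>R y = y" by (simp add: scaleR_add_left[symmetric])
    have "y - ((1/2) *\<^sub>R u + (1/2) *\<^sub>R v) = (1/2) *\<^sub>R (y - u) + (1/2) *\<^sub>R (y - v)"
      by (subst (1) yy[symmetric]) (simp add: algebra_simps)
    then have "f ((1/2) *\<^sub>R u + (1/2) *\<^sub>R v) = f u / 2 + f v / 2 - (norm (u - v))\<^sup>2/4"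
      unfolding f_def using half_id[of "y - u" "y - v"] by (simp add: norm_minus_commute)
    then show ?thesis by simp
  qed
  obtain s where s: "\<And>n. s n \<in> span S" "(\<lambda>n. f (s n)) \<longlonglongrightarrow> (INF u\<in>span S. f u)"
      "convergent (\<lambda>n. id (s n))" "\<And>u. u \<in> span S \<Longrightarrow> (INF u\<in>span S. f u) \<le> f u"
    using min_seq[of "span S" 0 f "1/4" id, OF subspace_imp_convex[OF subspace_span] _ _ mid] span_zero
    by (auto simp: f_def)
  define \<delta> where "\<delta> = (INF u\<in>span S. f u)"
  from s(3) obtain v where v: "s \<longlonglongrightarrow> v" by (auto simp: convergent_def)
  have fc: "(\<lambda>n. f (s n + c *\<^sub>R w)) \<longlonglongrightarrow> f (v + c *\<^sub>R w)" for c w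
    unfolding f_def by (intro tendsto_intros v)
  have "(\<lambda>n. f (s n)) \<longlonglongrightarrow> f v" using fc[of 0 0] by simp
  then have fv: "f v = \<delta>" using s(2) LIMSEQ_unique unfolding \<delta>_def by blast
  have orth: "(y - v) \<bullet> w = 0" if w: "w \<in> span S" for w
  proof -
    have "0 \<le> (-2 * ((y - v) \<bullet> w)) * t + (norm w)\<^sup>2 * t\<^sup>2" for t
    proof -
      have "\<delta> \<le> f (v + t *\<^sub>R w)"
        using fc[of t w] s(4)[OF span_add[OF s(1) span_scale[OF w]]]
        by (intro LIMSEQ_le_const[of _ "f (v + t *\<^sub>R w)"]) (auto simp: \<delta>_def)
      moreover have "f (v + t *\<^sub>R w) = f v - 2 * t * ((y - v) \<bullet> w) + t\<^sup>2 * (norm w)\<^sup>2"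
        unfolding f_def power2_norm_eq_inner by (simp add: inner_simps algebra_simps power2_eq_square inner_commute)
      ultimately show ?thesis using fv by (simp add: algebra_simps)
    qed
    then have "-2 * ((y - v) \<bullet> w) = 0" by (intro quad_zero[of "(norm w)\<^sup>2"]) auto
    then show ?thesis by simp
  qed
  show ?thesis using that[OF s(1) v orth] .
qed

lemma riesz:
  fixes L :: "'a::{real_inner,complete_space} \<Rightarrow> real"
  assumes lin: "linear L" and bd: "\<And>y. \<bar>L y\<bar> \<le> M * norm y"
  obtains w where "\<And>y. L y = w \<bullet> y"
proof -
  define f where "f u = (norm u)\<^sup>2 / 2 - L u" for u
  have Ladd: "L (a + b) = L a + L b" for a b using lin by (simp add: linear_add)
  have Lsc: "L (c *\<^sub>R a) = c * L a" for c a using lin by (simp add: linear_scale)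
  have bl: "bounded_linear L"
    by (rule bounded_linear_intro[of L M]) (auto simp: Ladd Lsc mult.commute bd)
  have lb: "- (M\<^sup>2) / 2 \<le> f u" for u
  proof -
    have "L u \<le> M * norm u" using bd[of u] by simp
    moreover have "0 \<le> (norm u - M)\<^sup>2" by simp
    ultimately show ?thesis unfolding f_def by (simp add: power2_eq_square algebra_simps)
  qed
  have mid: "f ((1/2) *\<^sub>R u + (1/2) *\<^sub>R v) \<le> (f u + f v) / 2 - (1/8) * (norm (id u - id v))\<^sup>2" for u v
    unfolding f_def half_id Ladd Lsc by (simp add: field_simps)
  obtain s where s: "\<And>n. s n \<in> UNIV" "(\<lambda>n. f (s n)) \<longlonglongrightarrow> (INF u\<in>UNIV. f u)"
      "convergent (\<lambda>n. id (s n))" "\<And>u. u \<in> UNIV \<Longrightarrow> (INF u\<in>UNIV. f u) \<le> f u"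
    using min_seq[of UNIV "- (M\<^sup>2) / 2" f "1/8" id] mid lb by auto
  define \<delta> where "\<delta> = (INF u\<in>UNIV. f u)"
  from s(3) obtain w where w: "s \<longlonglongrightarrow> w" by (auto simp: convergent_def)
  have "(\<lambda>n. f (s n)) \<longlonglongrightarrow> f w" unfolding f_def
    by (intro tendsto_intros w bounded_linear.tendsto[OF bl]) auto
  then have fw: "f w = \<delta>" using s(2) LIMSEQ_unique unfolding \<delta>_def by blast
  have "L y = w \<bullet> y" for y
  proof -
    have "0 \<le> (w \<bullet> y - L y) * t + ((norm y)\<^sup>2/2) * t\<^sup>2" for t
    proof -
      have "\<delta> \<le> f (w + t *\<^sub>R y)" using s(4) unfolding \<delta>_def by simp
      moreover have "f (w + t *\<^sub>R y) = f w + t * (w \<bullet> y - L y) + t\<^sup>2 * (norm y)\<^sup>2 / 2"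
        unfolding f_def Ladd Lsc power2_norm_eq_inner by (simp add: inner_simps field_simps power2_eq_square inner_commute)
      ultimately show ?thesis using fw by (simp add: algebra_simps)
    qed
    then have "w \<bullet> y - L y = 0" by (intro quad_zero[of "(norm y)\<^sup>2/2"]) auto
    then show ?thesis by simp
  qed
  then show ?thesis using that by blast
qed

lemma real_bdd_subseq:
  fixes f :: "nat \<Rightarrow> real"
  assumes "\<And>n. \<bar>f n\<bar> \<le> B"
  shows "\<exists>r. strict_mono r \<and> convergent (f \<circ> r)"
proof -
  have "bounded (range f)" using assms by (auto simp: bounded_iff)
  then obtain l r where "strict_mono r" "(f \<circ> r) \<longlonglongrightarrow> l"
    using bounded_imp_convergent_subsequence by blast
  then show ?thesis by (auto simp: convergent_def)
qed

lemma weak_subseq: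
  fixes x :: "nat \<Rightarrow> 'a::{real_inner,complete_space}"
  assumes bd: "\<And>n. norm (x n) \<le> M"
  obtains \<sigma> w where "strict_mono \<sigma>" "weak_conv (\<lambda>n. x (\<sigma> n)) w"
proof -
  have M0: "0 \<le> M" using bd[of 0] norm_ge_zero order_trans by blast
  interpret S: subseqs "\<lambda>k s. convergent (\<lambda>n. x (s n) \<bullet> x k)"
  proof
    fix k and s :: "nat \<Rightarrow> nat" assume "strict_mono s"
    have "\<bar>x (s n) \<bullet> x k\<bar> \<le> M * norm (x k)" for n
      using Cauchy_Schwarz_ineq2[of "x (s n)" "x k"] bd[of "s n"]
      by (meson mult_right_mono norm_ge_zero order_trans)
    then obtain r where "strict_mono r" "convergent ((\<lambda>n. x (s n) \<bullet> x k) \<circ> r)"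
      using real_bdd_subseq[of "\<lambda>n. x (s n) \<bullet> x k" "M * norm (x k)"] by blast
    then show "\<exists>r'. strict_mono r' \<and> convergent (\<lambda>n. x ((s \<circ> r') n) \<bullet> x k)"
      by (auto simp: o_def)
  qed
  define \<sigma> where "\<sigma> = S.diagseq"
  have smono: "strict_mono \<sigma>" unfolding \<sigma>_def by (rule S.subseq_diagseq)
  have conv_k: "convergent (\<lambda>n. x (\<sigma> n) \<bullet> x k)" for k
  proof -
    have "convergent (\<lambda>n. x ((S.diagseq \<circ> (+) (Suc k)) n) \<bullet> x k)"
    proof (rule S.diagseq_holds)
      fix r s n assume "strict_mono (r :: nat \<Rightarrow> nat)" "convergent (\<lambda>m. x (s m) \<bullet> x n)"
      then show "convergent (\<lambda>m. x ((s \<circ> r) m) \<bullet> x n)"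
        using LIMSEQ_subseq_LIMSEQ by (fastforce simp: convergent_def o_def)
    qed
    then obtain l where "(\<lambda>n. x (\<sigma> (n + Suc k)) \<bullet> x k) \<longlonglongrightarrow> l"
      by (auto simp: convergent_def o_def \<sigma>_def add.commute)
    then have "(\<lambda>n. x (\<sigma> n) \<bullet> x k) \<longlonglongrightarrow> l" by (rule LIMSEQ_offset)
    then show ?thesis by (auto simp: convergent_def)
  qed
  have conv_span: "convergent (\<lambda>n. x (\<sigma> n) \<bullet> v)" if "v \<in> span (range x)" for v
    using that
  proof (induction rule: span_induct_alt)
    case base
    then show ?case by (simp add: convergent_const)
  next
    case (step c a y)
    then obtain k where "a = x k" by auto
    obtain l1 where l1: "(\<lambda>n. x (\<sigma> n) \<bullet> x k) \<longlonglongrightarrow> l1" using conv_k by (auto simp: convergent_def)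
    obtain l2 where l2: "(\<lambda>n. x (\<sigma> n) \<bullet> y) \<longlonglongrightarrow> l2" using step by (auto simp: convergent_def)
    have "(\<lambda>n. c * (x (\<sigma> n) \<bullet> x k) + x (\<sigma> n) \<bullet> y) \<longlonglongrightarrow> c * l1 + l2"
      by (intro tendsto_intros l1 l2)
    then show ?case unfolding \<open>a = x k\<close> by (auto simp: convergent_def inner_add_right)
  qed
  have conv_all: "convergent (\<lambda>n. x (\<sigma> n) \<bullet> y)" for y
  proof -
    obtain v s where s: "\<And>m. s m \<in> span (range x)" "s \<longlonglongrightarrow> v"
      and orth: "\<And>w. w \<in> span (range x) \<Longrightarrow> (y - v) \<bullet> w = 0"
      using proj_span[where y=y and S="range x"] by blast
    have eq: "x (\<sigma> n) \<bullet> y = x (\<sigma> n) \<bullet> v" for n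
    proof -
      have "(y - v) \<bullet> x (\<sigma> n) = 0" using orth span_base[of "x (\<sigma> n)" "range x"] by auto
      then show ?thesis by (simp add: inner_diff_left inner_commute)
    qed
    have "Cauchy (\<lambda>n. x (\<sigma> n) \<bullet> v)"
    proof (rule metric_CauchyI)
      fix e :: real assume e: "0 < e"
      define d where "d = e / (3 * (M + 1))"
      have d: "d > 0" using e M0 by (simp add: d_def)
      obtain m where m: "norm (s m - v) < d"
        using s(2) d unfolding LIMSEQ_iff by auto
      have "Cauchy (\<lambda>n. x (\<sigma> n) \<bullet> s m)" using conv_span[OF s(1)] by (simp add: Cauchy_convergent_iff)
      then obtain N where N: "\<And>a b. a \<ge> N \<Longrightarrow> b \<ge> N \<Longrightarrow> dist (x (\<sigma> a) \<bullet> s m) (x (\<sigma> b) \<bullet> s m) < e/3"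
        using e unfolding Cauchy_def by (meson divide_pos_pos zero_less_numeral)
      have Md: "M * d < e / 3" using e M0 unfolding d_def by (simp add: field_simps)
      have key: "\<bar>x (\<sigma> a) \<bullet> (v - s m)\<bar> \<le> M * d" for a
        using Cauchy_Schwarz_ineq2[of "x (\<sigma> a)" "v - s m"] bd[of "\<sigma> a"] m M0
        by (smt (verit, best) mult_mono norm_ge_zero norm_minus_commute)
      show "\<exists>N. \<forall>a\<ge>N. \<forall>b\<ge>N. dist (x (\<sigma> a) \<bullet> v) (x (\<sigma> b) \<bullet> v) < e"
      proof (intro exI allI impI)
        fix a b assume ab: "N \<le> a" "N \<le> b"
        have "x (\<sigma> a) \<bullet> v - x (\<sigma> b) \<bullet> v = (x (\<sigma> a) \<bullet> s m - x (\<sigma> b) \<bullet> s m)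
             + x (\<sigma> a) \<bullet> (v - s m) - x (\<sigma> b) \<bullet> (v - s m)"
          by (simp add: inner_diff_right)
        then show "dist (x (\<sigma> a) \<bullet> v) (x (\<sigma> b) \<bullet> v) < e"
          using N[OF ab] key[of a] key[of b] Md unfolding dist_real_def by linarith
      qed
    qed
    then show ?thesis using eq by (simp add: Cauchy_convergent_iff)
  qed
  define L where "L y = lim (\<lambda>n. x (\<sigma> n) \<bullet> y)" for y
  have Llim: "(\<lambda>n. x (\<sigma> n) \<bullet> y) \<longlonglongrightarrow> L y" for y
    unfolding L_def using conv_all convergent_LIMSEQ_iff by blast
  have lin: "linear L"
  proof (rule linearI)
    fix a b
    have "(\<lambda>n. x (\<sigma> n) \<bullet> (a + b)) \<longlonglongrightarrow> L a + L b"
      unfolding inner_add_right by (intro tendsto_intros Llim)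
    then show "L (a + b) = L a + L b" using Llim LIMSEQ_unique by blast
  next
    fix c :: real and a
    have "(\<lambda>n. x (\<sigma> n) \<bullet> (c *\<^sub>R a)) \<longlonglongrightarrow> c *\<^sub>R L a"
      unfolding inner_scaleR_right by (auto intro!: tendsto_intros Llim)
    then show "L (c *\<^sub>R a) = c *\<^sub>R L a" using Llim LIMSEQ_unique by blast
  qed
  have bdL: "\<bar>L y\<bar> \<le> M * norm y" for y
  proof -
    have "(\<lambda>n. \<bar>x (\<sigma> n) \<bullet> y\<bar>) \<longlonglongrightarrow> \<bar>L y\<bar>" by (intro tendsto_intros Llim)
    moreover have "\<bar>x (\<sigma> n) \<bullet> y\<bar> \<le> M * norm y" for n
      using Cauchy_Schwarz_ineq2[of "x (\<sigma> n)" y] bd[of "\<sigma> n"]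
      by (meson mult_right_mono norm_ge_zero order_trans)
    ultimately show ?thesis by (intro LIMSEQ_le_const2) auto
  qed
  obtain w where w: "\<And>y. L y = w \<bullet> y" using riesz[OF lin bdL] by blast
  have "weak_conv (\<lambda>n. x (\<sigma> n)) w"
    unfolding weak_conv_def using Llim w by (simp add: inner_commute)
  then show ?thesis using that smono by blast
qed

lemma weak_conv_subseq: "weak_conv f w \<Longrightarrow> strict_mono r \<Longrightarrow> weak_conv (\<lambda>n. f (r n)) w"
  unfolding weak_conv_def using LIMSEQ_subseq_LIMSEQ by (fastforce simp: o_def)

lemma weak_subseq_family:
  fixes x :: "nat \<Rightarrow> nat \<Rightarrow> 'a::{real_inner,complete_space}"
  assumes bd: "\<And>i n. i < r \<Longrightarrow> norm (x i n) \<le> M"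
  shows "\<exists>\<sigma> w. strict_mono \<sigma> \<and> (\<forall>i<r. weak_conv (\<lambda>n. x i (\<sigma> n)) (w i))"
  using bd
proof (induction r)
  case 0
  then show ?case by (auto intro: strict_monoI)
next
  case (Suc r)
  then obtain \<sigma> w where \<sigma>: "strict_mono \<sigma>" "\<forall>i<r. weak_conv (\<lambda>n. x i (\<sigma> n)) (w i)" by auto
  obtain \<tau> w' where \<tau>: "strict_mono \<tau>" "weak_conv (\<lambda>n. x r (\<sigma> (\<tau> n))) w'"
    using weak_subseq[of "\<lambda>n. x r (\<sigma> n)" M] Suc.prems by auto
  have "strict_mono (\<sigma> \<circ> \<tau>)" using \<sigma>(1) \<tau>(1) by (simp add: strict_mono_o)
  moreover have "\<forall>i<Suc r. weak_conv (\<lambda>n. x i ((\<sigma> \<circ> \<tau>) n)) ((w(r := w')) i)"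
  proof (intro allI impI)
    fix i assume "i < Suc r"
    then consider "i < r" | "i = r" by linarith
    then show "weak_conv (\<lambda>n. x i ((\<sigma> \<circ> \<tau>) n)) ((w(r := w')) i)"
    proof cases
      case 1 then show ?thesis using weak_conv_subseq[OF _ \<tau>(1), of "\<lambda>n. x i (\<sigma> n)"] \<sigma>(2) by auto
    next
      case 2 then show ?thesis using \<tau>(2) by auto
    qed
  qed
  ultimately show ?case by blast
qed

lemma maxmono_mono: "maximal_monotone A \<Longrightarrow> monotone_op A"
  by (simp add: maximal_monotone_def)

lemma maxmono_crit:
  assumes A: "maximal_monotone A"
    and h: "\<And>y v. v \<in> A y \<Longrightarrow> 0 \<le> (x - y) \<bullet> (u - v)"
  shows "u \<in> A x"
proof -
  define S where "S z = (if z = x then insert u (A z) else A z)" for z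
  have mA: "monotone_op A" using A by (simp add: maximal_monotone_def)
  have "monotone_op S"
    unfolding monotone_op_def
  proof (intro allI impI)
    fix a b c d assume c: "c \<in> S a" and d: "d \<in> S b"
    have sym: "0 \<le> (a - b) \<bullet> (c - d) \<longleftrightarrow> 0 \<le> (b - a) \<bullet> (d - c)"
      by (metis inner_minus_left inner_minus_right minus_diff_eq)
    show "0 \<le> (a - b) \<bullet> (c - d)"
    proof (cases "a = x \<and> c = u")
      case True
      then show ?thesis
      proof (cases "b = x \<and> d = u")
        case True then show ?thesis using \<open>a = x \<and> c = u\<close> by simp
      next
        case False
        then have "d \<in> A b" using d by (auto simp: S_def split: if_splits)
        then show ?thesis using h True by auto
      qed
    next
      case False
      then have cA: "c \<in> A a" using c by (auto simp: S_def split: if_splits)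
      show ?thesis
      proof (cases "b = x \<and> d = u")
        case True
        then show ?thesis using h[OF cA] sym by auto
      next
        case False
        then have "d \<in> A b" using d by (auto simp: S_def split: if_splits)
        then show ?thesis using mA cA unfolding monotone_op_def by blast
      qed
    qed
  qed
  moreover have "\<forall>z. A z \<subseteq> S z" by (auto simp: S_def)
  ultimately have "S = A" using A unfolding maximal_monotone_def by blast
  then show ?thesis by (metis S_def insertI1)
qed

lemma monotone_sum_op:
  assumes "\<And>i. i < r \<Longrightarrow> monotone_op (A i)"
  shows "monotone_op (sum_op r A)"
  unfolding monotone_op_def
proof (intro allI impI)
  fix x y a b assume a: "a \<in> sum_op r A x" and b: "b \<in> sum_op r A y"
  obtain u where u: "a = (\<Sum>i<r. u i)" "\<forall>i<r. u i \<in> A i x" using a by (auto simp: sum_op_def)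
  obtain v where v: "b = (\<Sum>i<r. v i)" "\<forall>i<r. v i \<in> A i y" using b by (auto simp: sum_op_def)
  have "(x - y) \<bullet> (a - b) = (\<Sum>i<r. (x - y) \<bullet> (u i - v i))"
    by (simp add: u v inner_sum_right inner_diff_right sum_subtractf)
  also have "\<dots> \<ge> 0"
    using assms u(2) v(2) unfolding monotone_op_def by (intro sum_nonneg) auto
  finally show "0 \<le> (x - y) \<bullet> (a - b)" .
qed

lemma monotone_scale_op:
  assumes "monotone_op T" "c \<ge> 0"
  shows "monotone_op (scale_op c T)"
  using assms unfolding monotone_op_def scale_op_def
  by (auto simp: scaleR_diff_right[symmetric] inner_scaleR_right)

lemma maxmono_closed:
  assumes A: "maximal_monotone A"
    and u: "\<And>n. u n \<in> A (s n)" and s: "s \<longlonglongrightarrow> s0" and w: "weak_conv u u0"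
    and bd: "\<And>n. norm (u n) \<le> B"
  shows "u0 \<in> A s0"
proof (rule maxmono_crit[OF A])
  fix y v assume v: "v \<in> A y"
  have mono: "0 \<le> (s n - y) \<bullet> (u n - v)" for n
    using A u v unfolding maximal_monotone_def monotone_op_def by blast
  have e: "(s n - y) \<bullet> (u n - v) = (s0 - y) \<bullet> (u n) - (s0 - y) \<bullet> v + (s n - s0) \<bullet> (u n - v)" for n
    by (simp add: inner_simps)
  have "(\<lambda>n. u n \<bullet> (s0 - y)) \<longlonglongrightarrow> u0 \<bullet> (s0 - y)"
    using w unfolding weak_conv_def by blast
  then have t1: "(\<lambda>n. (s0 - y) \<bullet> u n) \<longlonglongrightarrow> (s0 - y) \<bullet> u0"
    by (simp add: inner_commute)
  have t2: "(\<lambda>n. (s n - s0) \<bullet> (u n - v)) \<longlonglongrightarrow> 0"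
  proof (rule tendsto_sandwich[where f="\<lambda>n. - (norm (s n - s0) * (B + norm v))" and h="\<lambda>n. norm (s n - s0) * (B + norm v)"])
    have n0: "(\<lambda>n. norm (s n - s0)) \<longlonglongrightarrow> 0" using s by (simp add: tendsto_norm_zero_iff LIMSEQ_iff_nz[symmetric] Lim_null[symmetric])
    have bb: "\<bar>(s n - s0) \<bullet> (u n - v)\<bar> \<le> norm (s n - s0) * (B + norm v)" for n
    proof -
      have "norm (u n - v) \<le> B + norm v" using bd[of n] norm_triangle_ineq4[of "u n" v] by linarith
      then show ?thesis using Cauchy_Schwarz_ineq2[of "s n - s0" "u n - v"]
        by (meson mult_left_mono norm_ge_zero order_trans)
    qed
    show "\<forall>\<^sub>F n in sequentially. - (norm (s n - s0) * (B + norm v)) \<le> (s n - s0) \<bullet> (u n - v)"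
      using bb by (intro always_eventually allI) (smt (verit) abs_le_iff)
    show "\<forall>\<^sub>F n in sequentially. (s n - s0) \<bullet> (u n - v) \<le> norm (s n - s0) * (B + norm v)"
      using bb by (intro always_eventually allI) (smt (verit) abs_le_iff)
    show "(\<lambda>n. - (norm (s n - s0) * (B + norm v))) \<longlonglongrightarrow> 0"
      using tendsto_minus[OF tendsto_mult_left_zero[OF n0]] by simp
    show "(\<lambda>n. norm (s n - s0) * (B + norm v)) \<longlonglongrightarrow> 0"
      using tendsto_mult_left_zero[OF n0] by simp
  qed
  have "(\<lambda>n. (s n - y) \<bullet> (u n - v)) \<longlonglongrightarrow> (s0 - y) \<bullet> u0 - (s0 - y) \<bullet> v + 0"
    unfolding e by (intro tendsto_intros t1 t2)
  then have "0 \<le> (s0 - y) \<bullet> u0 - (s0 - y) \<bullet> v" using mono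
    by (intro LIMSEQ_le_const[of _ "(s0 - y) \<bullet> u0 - (s0 - y) \<bullet> v"]) auto
  then show "0 \<le> (s0 - y) \<bullet> (u0 - v)" by (simp add: inner_diff_right)
qed

lemma lin_small:
  fixes \<alpha> \<beta> :: real
  assumes "\<And>t. 0 < t \<Longrightarrow> t \<le> 1 \<Longrightarrow> 0 \<le> \<alpha> + t * \<beta>"
  shows "0 \<le> \<alpha>"
proof (rule ccontr)
  assume "\<not> 0 \<le> \<alpha>"
  then have a: "\<alpha> < 0" by simp
  define t where "t = min 1 (- \<alpha> / (2 * (\<bar>\<beta>\<bar> + 1)))"
  have "0 < - \<alpha> / (2 * (\<bar>\<beta>\<bar> + 1))" using a by (intro divide_pos_pos) auto
  then have t0: "0 < t" by (simp add: t_def)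
  have t1: "t \<le> 1" by (simp add: t_def)
  have "t \<le> - \<alpha> / (2 * (\<bar>\<beta>\<bar> + 1))" by (simp add: t_def)
  then have "t * (2 * (\<bar>\<beta>\<bar> + 1)) \<le> (- \<alpha> / (2 * (\<bar>\<beta>\<bar> + 1))) * (2 * (\<bar>\<beta>\<bar> + 1))"
    by (intro mult_right_mono) auto
  then have "t * (2 * (\<bar>\<beta>\<bar> + 1)) \<le> - \<alpha>" by simp
  moreover have "t * \<beta> \<le> t * (\<bar>\<beta>\<bar> + 1)" using t0 by (intro mult_left_mono) auto
  ultimately have "\<alpha> + t * \<beta> < 0" using a by linarith
  then show False using assms[OF t0 t1] by simp
qed

lemma convex_halfspace_aff:
  fixes F :: "'b::real_vector \<Rightarrow> real"
  assumes "\<And>x y u v. u + v = 1 \<Longrightarrow> F (u *\<^sub>R x + v *\<^sub>R y) = u * F x + v * F y"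
  shows "convex {d. 0 \<le> F d}"
  by (rule convexI) (auto simp: assms)

lemma minty:
  fixes A :: "'a::{real_inner,complete_space} \<Rightarrow> 'a set"
  assumes A: "maximal_monotone A" and g: "\<gamma> > 0"
  shows "\<exists>w u. u \<in> A w \<and> z = w + \<gamma> *\<^sub>R u"
proof -
  have mA: "monotone_op A" using A by (simp add: maximal_monotone_def)
  have claim: "\<exists>w. \<forall>y v. v \<in> A y \<longrightarrow> 0 \<le> (w - y) \<bullet> (z - w - \<gamma> *\<^sub>R v)"
  proof (cases "\<exists>y. A y \<noteq> {}")
    case False then show ?thesis by auto
  next
    case True
    then obtain y0 v0 where v0: "v0 \<in> A y0" by auto
    define G3 where "G3 = {(y, v, y \<bullet> v) | y v. v \<in> A y}"
    define D where "D = convex hull G3"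
    define a where "a d = z - \<gamma> *\<^sub>R fst (snd d) + fst d" for d :: "'a \<times> 'a \<times> real"
    define c where "c d = fst d \<bullet> z - \<gamma> * snd (snd d)" for d :: "'a \<times> 'a \<times> real"
    define h where "h d = (norm (a d))\<^sup>2 / 4 - c d" for d
    have a_aff: "a (u *\<^sub>R d1 + v *\<^sub>R d2) = u *\<^sub>R a d1 + v *\<^sub>R a d2" if "u + v = 1" for u v d1 d2
    proof -
      have "z = u *\<^sub>R z + v *\<^sub>R z" using that by (simp add: scaleR_add_left[symmetric])
      then show ?thesis unfolding a_def by (simp add: algebra_simps)
    qed
    have c_aff: "c (u *\<^sub>R d1 + v *\<^sub>R d2) = u * c d1 + v * c d2" if "u + v = 1" for u v d1 d2
    proof -
      have "fst (u *\<^sub>R d1 + v *\<^sub>R d2) \<bullet> z = u * (fst d1 \<bullet> z) + v * (fst d2 \<bullet> z)"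
        by (simp add: inner_add_left)
      then show ?thesis unfolding c_def by (simp add: algebra_simps)
    qed
    have DG: "G3 \<subseteq> D" unfolding D_def by (rule hull_subset)
    have convD: "convex D" unfolding D_def by simp
    have step1: "\<forall>d\<in>D. 0 \<le> y \<bullet> v + snd (snd d) - y \<bullet> fst (snd d) - fst d \<bullet> v" if yv: "v \<in> A y" for y v
    proof -
      have "D \<subseteq> {d. 0 \<le> y \<bullet> v + snd (snd d) - y \<bullet> fst (snd d) - fst d \<bullet> v}"
        unfolding D_def
      proof (rule hull_minimal)
        show "G3 \<subseteq> {d. 0 \<le> y \<bullet> v + snd (snd d) - y \<bullet> fst (snd d) - fst d \<bullet> v}"
        proof
          fix d assume "d \<in> G3"
          then obtain y' v' where d: "d = (y', v', y' \<bullet> v')" "v' \<in> A y'" by (auto simp: G3_def)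
          have "0 \<le> (y - y') \<bullet> (v - v')" using mA yv d(2) unfolding monotone_op_def by blast
          then show "d \<in> {d. 0 \<le> y \<bullet> v + snd (snd d) - y \<bullet> fst (snd d) - fst d \<bullet> v}"
            using d(1) by (simp add: inner_diff_left inner_diff_right)
        qed
        show "convex {d. 0 \<le> y \<bullet> v + snd (snd d) - y \<bullet> fst (snd d) - fst d \<bullet> v}"
        proof (rule convex_halfspace_aff)
          fix d1 d2 :: "'a \<times> 'a \<times> real" and u w :: real assume "u + w = 1"
          then show "y \<bullet> v + snd (snd (u *\<^sub>R d1 + w *\<^sub>R d2)) - y \<bullet> fst (snd (u *\<^sub>R d1 + w *\<^sub>R d2)) - fst (u *\<^sub>R d1 + w *\<^sub>R d2) \<bullet> v
            = u * (y \<bullet> v + snd (snd d1) - y \<bullet> fst (snd d1) - fst d1 \<bullet> v) + w * (y \<bullet> v + snd (snd d2) - y \<bullet> fst (snd d2) - fst d2 \<bullet> v)"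
            by (simp add: inner_add_left inner_add_right algebra_simps)
              (metis (no_types, lifting) add.commute add_diff_cancel_left' distrib_left mult.commute mult_1)
        qed
      qed
      then show ?thesis by blast
    qed
    have key: "fst d \<bullet> fst (snd d) \<le> snd (snd d)" if d: "d \<in> D" for d
    proof -
      have "D \<subseteq> {e. 0 \<le> snd (snd e) + snd (snd d) - fst e \<bullet> fst (snd d) - fst d \<bullet> fst (snd e)}"
        unfolding D_def
      proof (rule hull_minimal)
        show "G3 \<subseteq> {e. 0 \<le> snd (snd e) + snd (snd d) - fst e \<bullet> fst (snd d) - fst d \<bullet> fst (snd e)}"
        proof
          fix e assume "e \<in> G3"
          then obtain y' v' where e: "e = (y', v', y' \<bullet> v')" "v' \<in> A y'" by (auto simp: G3_def)
          show "e \<in> {e. 0 \<le> snd (snd e) + snd (snd d) - fst e \<bullet> fst (snd d) - fst d \<bullet> fst (snd e)}"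
            using step1[OF e(2)] d e(1) by auto
        qed
        show "convex {e. 0 \<le> snd (snd e) + snd (snd d) - fst e \<bullet> fst (snd d) - fst d \<bullet> fst (snd e)}"
        proof (rule convex_halfspace_aff)
          fix d1 d2 :: "'a \<times> 'a \<times> real" and u w :: real assume "u + w = 1"
          then show "snd (snd (u *\<^sub>R d1 + w *\<^sub>R d2)) + snd (snd d) - fst (u *\<^sub>R d1 + w *\<^sub>R d2) \<bullet> fst (snd d) - fst d \<bullet> fst (snd (u *\<^sub>R d1 + w *\<^sub>R d2))
            = u * (snd (snd d1) + snd (snd d) - fst d1 \<bullet> fst (snd d) - fst d \<bullet> fst (snd d1)) + w * (snd (snd d2) + snd (snd d) - fst d2 \<bullet> fst (snd d) - fst d \<bullet> fst (snd d2))"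
            by (simp add: inner_add_left inner_add_right algebra_simps)
              (metis (no_types, lifting) add.commute add_diff_cancel_left' distrib_left mult.commute mult_1)
        qed
      qed
      then have "0 \<le> snd (snd d) + snd (snd d) - fst d \<bullet> fst (snd d) - fst d \<bullet> fst (snd d)" using d by blast
      then show ?thesis by linarith
    qed
    have hpos: "0 \<le> h d" if d: "d \<in> D" for d
    proof -
      define b where "b = z - \<gamma> *\<^sub>R fst (snd d)"
      have "c d \<le> fst d \<bullet> z - \<gamma> * (fst d \<bullet> fst (snd d))"
        unfolding c_def using key[OF d] g by (simp add: mult_left_mono)
      also have "\<dots> = fst d \<bullet> b" unfolding b_def by (simp add: inner_diff_right)
      finally have cd: "c d \<le> fst d \<bullet> b" .
      have "(norm (a d))\<^sup>2 / 4 - fst d \<bullet> b = (norm (b - fst d))\<^sup>2 / 4"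
        unfolding a_def b_def[symmetric] power2_norm_eq_inner
        by (simp add: inner_simps inner_commute field_simps)
      then show ?thesis unfolding h_def using cd by (smt (verit) zero_le_power2 divide_nonneg_nonneg)
    qed
    have mid: "h ((1/2) *\<^sub>R d1 + (1/2) *\<^sub>R d2) \<le> (h d1 + h d2) / 2 - (1/16) * (norm (a d1 - a d2))\<^sup>2" for d1 d2
    proof -
      have "h ((1/2) *\<^sub>R d1 + (1/2) *\<^sub>R d2) = (norm ((1/2) *\<^sub>R a d1 + (1/2) *\<^sub>R a d2))\<^sup>2 / 4 - (c d1 / 2 + c d2 / 2)"
        unfolding h_def a_aff[of "1/2" "1/2", simplified] c_aff[of "1/2" "1/2", simplified] by simp
      also have "\<dots> = (h d1 + h d2) / 2 - (1/16) * (norm (a d1 - a d2))\<^sup>2"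
        unfolding half_id h_def by (simp add: field_simps)
      finally show ?thesis by simp
    qed
    have Dne: "D \<noteq> {}" using DG v0 unfolding G3_def by blast
    obtain ds where ds: "\<And>n. ds n \<in> D" "(\<lambda>n. h (ds n)) \<longlonglongrightarrow> (INF d\<in>D. h d)"
      "convergent (\<lambda>n. a (ds n))"
      apply (rule min_seq[where C=D and b=0 and f=h and \<kappa>="1/16" and g=a])
      using convD Dne hpos mid by auto
    define \<eta> where "\<eta> = (INF d\<in>D. h d)"
    obtain as where as: "(\<lambda>n. a (ds n)) \<longlonglongrightarrow> as" using ds(3) by (auto simp: convergent_def)
    have hlim: "(\<lambda>n. h (ds n)) \<longlonglongrightarrow> \<eta>" using ds(2) unfolding \<eta>_def .
    have eta0: "0 \<le> \<eta>" using hlim hpos[OF ds(1)] by (intro LIMSEQ_le_const) auto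
    have etale: "\<eta> \<le> h d" if "d \<in> D" for d
      unfolding \<eta>_def using that hpos by (intro cINF_lower bdd_belowI2) auto
    define w where "w = (1/2) *\<^sub>R as"
    have "0 \<le> (w - y) \<bullet> (z - w - \<gamma> *\<^sub>R v)" if yv: "v \<in> A y" for y v
    proof -
      define gk where "gk = (y, v, y \<bullet> v)"
      have gkD: "gk \<in> D" using DG yv unfolding G3_def gk_def by blast
      define ak where "ak = a gk"
      define ck where "ck = c gk"
      have akv: "ak = z - \<gamma> *\<^sub>R v + y" unfolding ak_def a_def gk_def by simp
      have ckv: "ck = y \<bullet> (ak - y)" unfolding ck_def c_def gk_def akv
        by (simp add: inner_simps inner_commute)
      have ineq: "0 \<le> ((norm ak)\<^sup>2/4 - (norm (as - ak))\<^sup>2/4 - ck - \<eta>) + t * ((norm (as - ak))\<^sup>2/4)"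
        if t: "0 < t" "t \<le> 1" for t
      proof -
        have En: "\<eta> \<le> (norm ((1-t) *\<^sub>R a (ds n) + t *\<^sub>R ak))\<^sup>2/4 - ((1-t) * ((norm (a (ds n)))\<^sup>2/4 - h (ds n)) + t * ck)" for n
        proof -
          have mixD: "(1-t) *\<^sub>R ds n + t *\<^sub>R gk \<in> D" using convexD[OF convD ds(1) gkD] t by simp
          have "h ((1-t) *\<^sub>R ds n + t *\<^sub>R gk) = (norm ((1-t) *\<^sub>R a (ds n) + t *\<^sub>R ak))\<^sup>2/4 - ((1-t) * c (ds n) + t * ck)"
            unfolding h_def a_aff[of "1-t" t, simplified] c_aff[of "1-t" t, simplified] ak_def ck_def by simp
          moreover have "c (ds n) = (norm (a (ds n)))\<^sup>2/4 - h (ds n)" unfolding h_def by simp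
          ultimately show ?thesis using etale[OF mixD] by simp
        qed
        have "(\<lambda>n. (norm ((1-t) *\<^sub>R a (ds n) + t *\<^sub>R ak))\<^sup>2/4 - ((1-t) * ((norm (a (ds n)))\<^sup>2/4 - h (ds n)) + t * ck))
            \<longlonglongrightarrow> (norm ((1-t) *\<^sub>R as + t *\<^sub>R ak))\<^sup>2/4 - ((1-t) * ((norm as)\<^sup>2/4 - \<eta>) + t * ck)"
          by (intro tendsto_intros as hlim) auto
        then have "\<eta> \<le> (norm ((1-t) *\<^sub>R as + t *\<^sub>R ak))\<^sup>2/4 - ((1-t) * ((norm as)\<^sup>2/4 - \<eta>) + t * ck)"
          using En by (intro LIMSEQ_le_const) auto
        then have "\<eta> \<le> ((1-t) * (norm as)\<^sup>2 + t * (norm ak)\<^sup>2 - t*(1-t) * (norm (as - ak))\<^sup>2)/4 - ((1-t) * ((norm as)\<^sup>2/4 - \<eta>) + t * ck)"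
          unfolding km_id .
        moreover have "((1-t) * (norm as)\<^sup>2 + t * (norm ak)\<^sup>2 - t*(1-t) * (norm (as - ak))\<^sup>2)/4 - ((1-t) * ((norm as)\<^sup>2/4 - \<eta>) + t * ck) - \<eta>
           = t * (((norm ak)\<^sup>2/4 - (norm (as - ak))\<^sup>2/4 - ck - \<eta>) + t * ((norm (as - ak))\<^sup>2/4))"
          by (simp add: field_simps)
        ultimately have "0 \<le> t * (((norm ak)\<^sup>2/4 - (norm (as - ak))\<^sup>2/4 - ck - \<eta>) + t * ((norm (as - ak))\<^sup>2/4))"
          by linarith
        then show ?thesis using t by (simp add: zero_le_mult_iff)
      qed
      have al: "0 \<le> (norm ak)\<^sup>2/4 - (norm (as - ak))\<^sup>2/4 - ck - \<eta>"
        by (rule lin_small[where \<beta>="(norm (as - ak))\<^sup>2/4"]) (use ineq in auto)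
      have "(w - y) \<bullet> (z - w - \<gamma> *\<^sub>R v) = (norm ak)\<^sup>2/4 - (norm (as - ak))\<^sup>2/4 - ck"
      proof -
        have e1: "z - w - \<gamma> *\<^sub>R v = ak - y - w" unfolding akv by (simp add: algebra_simps)
        have "(w - y) \<bullet> (z - w - \<gamma> *\<^sub>R v) = (w - y) \<bullet> (ak - y - w)" by (simp only: e1)
        also have "\<dots> = (norm ak)\<^sup>2/4 - (norm (as - ak))\<^sup>2/4 - ck" unfolding ckv w_def power2_norm_eq_inner
          by (simp add: inner_simps inner_commute field_simps)
        finally show ?thesis .
      qed
      then show ?thesis using al eta0 by linarith
    qed
    then show ?thesis by blast
  qed
  then obtain w where w: "\<And>y v. v \<in> A y \<Longrightarrow> 0 \<le> (w - y) \<bullet> (z - w - \<gamma> *\<^sub>R v)" by blast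
  define u where "u = (1/\<gamma>) *\<^sub>R (z - w)"
  have "u \<in> A w"
  proof (rule maxmono_crit[OF A])
    fix y v assume "v \<in> A y"
    have "u - v = (1/\<gamma>) *\<^sub>R (z - w - \<gamma> *\<^sub>R v)" unfolding u_def using g by (simp add: algebra_simps)
    then have "(w - y) \<bullet> (u - v) = (1/\<gamma>) * ((w - y) \<bullet> (z - w - \<gamma> *\<^sub>R v))" by simp
    then show "0 \<le> (w - y) \<bullet> (u - v)" using w[OF \<open>v \<in> A y\<close>] g by simp
  qed
  moreover have "z = w + \<gamma> *\<^sub>R u" unfolding u_def using g by simp
  ultimately show ?thesis by blast
qed

lemma liminf_small:
  fixes b lam :: "nat \<Rightarrow> real"
  assumes lam0: "\<And>n. 0 \<le> lam n" and S: "summable (\<lambda>n. lam n * (b n)\<^sup>2)"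
    and NS: "\<not> summable lam" and e: "e > 0"
  shows "\<exists>m\<ge>N. \<bar>b m\<bar> < e"
proof (rule ccontr)
  assume "\<not> (\<exists>m\<ge>N. \<bar>b m\<bar> < e)"
  then have ge: "\<And>m. m \<ge> N \<Longrightarrow> e \<le> \<bar>b m\<bar>" by force
  have "summable (\<lambda>n. lam n * (b n)\<^sup>2 / e\<^sup>2)" using S by (rule summable_divide)
  moreover have "norm (lam m) \<le> lam m * (b m)\<^sup>2 / e\<^sup>2" if "m \<ge> N" for m
  proof -
    have "e\<^sup>2 \<le> (b m)\<^sup>2" using ge[OF that] e
      by (metis abs_le_square_iff abs_of_pos)
    then have "1 \<le> (b m)\<^sup>2 / e\<^sup>2" using e by simp
    then have "lam m * 1 \<le> lam m * ((b m)\<^sup>2 / e\<^sup>2)" using lam0 by (intro mult_left_mono) auto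
    then show ?thesis using lam0[of m] by simp
  qed
  ultimately have "summable lam" by (rule summable_comparison_test')
  then show False using NS by simp
qed

lemma RL:
  fixes b lam :: "nat \<Rightarrow> real"
  assumes b0: "\<And>n. 0 \<le> b n" and lam0: "\<And>n. 0 \<le> lam n"
    and step: "\<And>n. \<bar>b (Suc n) - b n\<bar> \<le> C * lam n"
    and S: "summable (\<lambda>n. lam n * (b n)\<^sup>2)" and NS: "\<not> summable lam"
  shows "b \<longlonglongrightarrow> 0"
proof (rule ccontr)
  assume nt: "\<not> b \<longlonglongrightarrow> 0"
  define C' where "C' = \<bar>C\<bar> + 1"
  have C': "C' > 0" by (simp add: C'_def)
  have step': "\<bar>b (Suc n) - b n\<bar> \<le> C' * lam n" for n
  proof -
    have "C * lam n \<le> C' * lam n" using lam0[of n] unfolding C'_def by (intro mult_right_mono) auto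
    then show ?thesis using step[of n] by linarith
  qed
  from nt obtain e where e: "e > 0" and freq: "\<And>N. \<exists>n\<ge>N. e \<le> b n"
    unfolding LIMSEQ_iff using b0 by (force simp: not_less)
  define \<delta> where "\<delta> = e^3 / (8 * C')"
  have \<delta>: "\<delta> > 0" using e C' by (simp add: \<delta>_def)
  obtain N where N: "\<And>m n. m \<ge> N \<Longrightarrow> norm (\<Sum>k=m..<n. lam k * (b k)\<^sup>2) < \<delta>"
    using S \<delta> unfolding summable_Cauchy by blast
  obtain n0 where n0: "n0 \<ge> N" "e \<le> b n0" using freq by blast
  have ex: "\<exists>m. m \<ge> n0 \<and> b m < e/2"
    using liminf_small[OF lam0 S NS, of "e/2" n0] e b0 by auto
  define m where "m = (LEAST m. m \<ge> n0 \<and> b m < e/2)"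
  have m: "m \<ge> n0" "b m < e/2" using LeastI_ex[OF ex] unfolding m_def by auto
  have mmin: "e/2 \<le> b k" if "n0 \<le> k" "k < m" for k
    using not_less_Least[of k "\<lambda>m. m \<ge> n0 \<and> b m < e/2"] that unfolding m_def by auto
  have "m \<noteq> n0" using m(2) n0(2) e by auto
  then have "n0 < m" using m(1) by simp
  have tel: "b n0 - b m = (\<Sum>k=n0..<m. b k - b (Suc k))"
    using sum_Suc_diff'[OF m(1), of b] sum_subtractf[of b "\<lambda>k. b (Suc k)" "{n0..<m}"]
      sum_subtractf[of "\<lambda>k. b (Suc k)" b "{n0..<m}"] by linarith
  also have "\<dots> \<le> (\<Sum>k=n0..<m. C' * lam k)"
    using step' by (intro sum_mono) (metis abs_minus_commute abs_le_iff)
  finally have "e/2 < C' * (\<Sum>k=n0..<m. lam k)" using m n0 by (simp add: sum_distrib_left)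
  then have sl: "e/(2*C') < (\<Sum>k=n0..<m. lam k)" using C' by (simp add: field_simps)
  have "(\<Sum>k=n0..<m. (e/2)\<^sup>2 * lam k) \<le> (\<Sum>k=n0..<m. lam k * (b k)\<^sup>2)"
  proof (intro sum_mono)
    fix k assume "k \<in> {n0..<m}"
    then have "e/2 \<le> b k" using mmin by auto
    then have "(e/2)\<^sup>2 \<le> (b k)\<^sup>2" using e by (intro power_mono) auto
    then show "(e/2)\<^sup>2 * lam k \<le> lam k * (b k)\<^sup>2" using lam0[of k] by (simp add: mult.commute mult_left_mono)
  qed
  moreover have "(\<Sum>k=n0..<m. (e/2)\<^sup>2 * lam k) > \<delta>"
  proof -
    have "(\<Sum>k=n0..<m. (e/2)\<^sup>2 * lam k) = (e/2)\<^sup>2 * (\<Sum>k=n0..<m. lam k)" by (simp add: sum_distrib_left)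
    moreover have "(e/2)\<^sup>2 * (e/(2*C')) < (e/2)\<^sup>2 * (\<Sum>k=n0..<m. lam k)" using sl e by (intro mult_strict_left_mono) auto
    moreover have "(e/2)\<^sup>2 * (e/(2*C')) = \<delta>" unfolding \<delta>_def using C' by (simp add: power2_eq_square power3_eq_cube field_simps)
    ultimately show ?thesis by simp
  qed
  moreover have "(\<Sum>k=n0..<m. lam k * (b k)\<^sup>2) < \<delta>" using N[OF n0(1), of m] by simp
  ultimately show False by linarith
qed

lemma resolvent_eq:
  assumes uniq: "\<And>w1 w2. y - w1 \<in> T w1 \<Longrightarrow> y - w2 \<in> T w2 \<Longrightarrow> w1 = w2"
    and w: "y - w \<in> T w"
  shows "resolvent T y = w"
  unfolding resolvent_def using uniq w by (intro the_equality) auto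

locale setting =
  fixes A :: "nat \<Rightarrow> 'a::{real_inner, complete_space} \<Rightarrow> 'a set"
    and r :: nat and \<gamma> \<beta> :: real and lam :: "nat \<Rightarrow> real"
    and q :: 'a and x :: "nat \<Rightarrow> nat \<Rightarrow> 'a" and p :: "nat \<Rightarrow> 'a"
  assumes r: "r \<ge> 1"
    and A: "\<And>i. i < r \<Longrightarrow> maximal_monotone (A i)"
    and gamma: "\<gamma> > 0"
    and lam: "\<And>n. 0 \<le> lam n \<and> lam n \<le> 1"
    and lamsum: "\<not> summable (\<lambda>n. lam n * (1 - lam n))"
    and beta: "0 < \<beta>" "\<beta> < 1"
    and q: "q \<in> ran_id_plus (scale_op (\<gamma> / (2 * real r * (1 - \<beta>))) (sum_op r A))"
    and p: "\<And>n. p n = (1 / real r) *\<^sub>R (\<Sum>i<r. x i n)"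
    and iter: "\<And>n i. i < r \<Longrightarrow> x i (Suc n) =
        (1 - lam n) *\<^sub>R x i n +
        lam n *\<^sub>R ((2 * \<beta>) *\<^sub>R resolvent (scale_op \<gamma> (perturb_op (- q) (A i)))
                                 ((2 * \<beta>) *\<^sub>R p n - x i n)
                        - ((2 * \<beta>) *\<^sub>R p n - x i n))"
begin

definition J where "J i y = resolvent (scale_op \<gamma> (perturb_op (- q) (A i))) y"
definition avg :: "(nat \<Rightarrow> 'a) \<Rightarrow> 'a" where "avg v = (1 / real r) *\<^sub>R (\<Sum>i<r. v i)"
definition T where "T v i = (2 * \<beta>) *\<^sub>R J i ((2 * \<beta>) *\<^sub>R avg v - v i) - ((2 * \<beta>) *\<^sub>R avg v - v i)"
definition PN :: "(nat \<Rightarrow> 'a) \<Rightarrow> real" where "PN v = (\<Sum>i<r. (norm (v i))\<^sup>2)"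
definition X where "X n i = x i n"
definition Fx where "Fx v \<longleftrightarrow> (\<forall>i<r. T v i = v i)"
definition cc where "cc = \<gamma> / (2 * real r * (1 - \<beta>))"
definition SQ where "SQ = scale_op cc (sum_op r A)"

lemma r0: "real r > 0" using r by simp

lemma cc_pos: "cc > 0" unfolding cc_def using gamma beta r0 by simp

lemma J_uniq:
  assumes i: "i < r" and u1: "u1 \<in> A i (w1 + q)" "y - w1 = \<gamma> *\<^sub>R u1"
    and u2: "u2 \<in> A i (w2 + q)" "y - w2 = \<gamma> *\<^sub>R u2"
  shows "w1 = w2"
proof -
  have "0 \<le> ((w1 + q) - (w2 + q)) \<bullet> (u1 - u2)"
    using A[OF i] u1(1) u2(1) unfolding maximal_monotone_def monotone_op_def by blast
  moreover have "u1 - u2 = (1/\<gamma>) *\<^sub>R (w2 - w1)"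
  proof -
    have h: "\<gamma> *\<^sub>R (u1 - u2) = w2 - w1" using u1(2) u2(2) by (simp add: algebra_simps)
    have "u1 - u2 = (1/\<gamma>) *\<^sub>R (\<gamma> *\<^sub>R (u1 - u2))" using gamma by simp
    also have "\<dots> = (1/\<gamma>) *\<^sub>R (w2 - w1)" by (simp only: h)
    finally show ?thesis .
  qed
  ultimately have "0 \<le> (1/\<gamma>) * ((w1 - w2) \<bullet> (w2 - w1))" by simp
  then have "0 \<le> (w1 - w2) \<bullet> (w2 - w1)" using gamma by (simp add: zero_le_divide_iff)
  then have "(w1 - w2) \<bullet> (w1 - w2) \<le> 0" by (metis inner_minus_right minus_diff_eq neg_0_le_iff_le)
  then show ?thesis by (metis eq_iff_diff_eq_0 inner_gt_zero_iff not_le)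
qed

lemma J_mem: "y - w \<in> scale_op \<gamma> (perturb_op (- q) (A i)) w \<longleftrightarrow> (\<exists>u\<in>A i (w + q). y - w = \<gamma> *\<^sub>R u)"
  unfolding scale_op_def perturb_op_def by auto

lemma J_eq:
  assumes i: "i < r" and u: "u \<in> A i (w + q)" "y - w = \<gamma> *\<^sub>R u"
  shows "J i y = w"
  unfolding J_def
proof (rule resolvent_eq)
  show "y - w \<in> scale_op \<gamma> (perturb_op (- q) (A i)) w" using u J_mem by blast
  fix w1 w2 assume "y - w1 \<in> scale_op \<gamma> (perturb_op (- q) (A i)) w1"
    "y - w2 \<in> scale_op \<gamma> (perturb_op (- q) (A i)) w2"
  then show "w1 = w2" using J_uniq[OF i] unfolding J_mem by blast
qed

lemma J_rel:
  assumes i: "i < r"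
  shows "\<exists>u\<in>A i (J i y + q). y - J i y = \<gamma> *\<^sub>R u"
proof -
  obtain w u where wu: "u \<in> A i w" "y + q = w + \<gamma> *\<^sub>R u" using minty[OF A[OF i] gamma] by blast
  have "J i y = w - q" by (rule J_eq[OF i, of u]) (use wu in \<open>auto simp: algebra_simps\<close>)
  then show ?thesis using wu by (auto simp: algebra_simps)
qed

lemma J_firm:
  assumes i: "i < r"
  shows "(norm (J i a - J i b))\<^sup>2 \<le> (J i a - J i b) \<bullet> (a - b)"
proof -
  obtain ua where ua: "ua \<in> A i (J i a + q)" "a - J i a = \<gamma> *\<^sub>R ua" using J_rel[OF i] by blast
  obtain ub where ub: "ub \<in> A i (J i b + q)" "b - J i b = \<gamma> *\<^sub>R ub" using J_rel[OF i] by blast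
  have "0 \<le> ((J i a + q) - (J i b + q)) \<bullet> (ua - ub)"
    using A[OF i] ua(1) ub(1) unfolding maximal_monotone_def monotone_op_def by blast
  moreover have "ua - ub = (1/\<gamma>) *\<^sub>R ((a - b) - (J i a - J i b))"
  proof -
    have h: "\<gamma> *\<^sub>R (ua - ub) = (a - b) - (J i a - J i b)" using ua(2) ub(2) by (simp add: algebra_simps)
    have "ua - ub = (1/\<gamma>) *\<^sub>R (\<gamma> *\<^sub>R (ua - ub))" using gamma by simp
    also have "\<dots> = (1/\<gamma>) *\<^sub>R ((a - b) - (J i a - J i b))" by (simp only: h)
    finally show ?thesis .
  qed
  ultimately have "0 \<le> (1/\<gamma>) * ((J i a - J i b) \<bullet> ((a - b) - (J i a - J i b)))" by simp
  then have "0 \<le> (J i a - J i b) \<bullet> ((a - b) - (J i a - J i b))" using gamma by (simp add: zero_le_divide_iff)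
  then show ?thesis by (simp add: inner_diff_right power2_norm_eq_inner)
qed

lemma N_nonexp:
  assumes i: "i < r"
  shows "(norm (((2 * \<beta>) *\<^sub>R J i a - a) - ((2 * \<beta>) *\<^sub>R J i b - b)))\<^sup>2 \<le> (norm (a - b))\<^sup>2"
proof -
  define dj where "dj = J i a - J i b"
  define d where "d = a - b"
  have e: "((2 * \<beta>) *\<^sub>R J i a - a) - ((2 * \<beta>) *\<^sub>R J i b - b) = (2 * \<beta>) *\<^sub>R dj - d"
    unfolding dj_def d_def by (simp add: algebra_simps)
  have f: "(norm dj)\<^sup>2 \<le> dj \<bullet> d" using J_firm[OF i] unfolding dj_def d_def .
  have "(norm ((2 * \<beta>) *\<^sub>R dj - d))\<^sup>2 = 4 * \<beta>\<^sup>2 * (norm dj)\<^sup>2 - 4 * \<beta> * (dj \<bullet> d) + (norm d)\<^sup>2"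
    unfolding power2_norm_eq_inner by (simp add: inner_simps inner_commute power2_eq_square algebra_simps)
  also have "\<dots> \<le> 4 * \<beta>\<^sup>2 * (norm dj)\<^sup>2 - 4 * \<beta> * (norm dj)\<^sup>2 + (norm d)\<^sup>2"
    using f beta by (simp add: mult_left_mono)
  also have "\<dots> \<le> (norm d)\<^sup>2"
  proof -
    have "4 * \<beta>\<^sup>2 * (norm dj)\<^sup>2 \<le> 4 * \<beta> * (norm dj)\<^sup>2"
      using beta by (intro mult_right_mono) (auto simp: power2_eq_square)
    then show ?thesis by linarith
  qed
  finally show ?thesis unfolding e d_def .
qed

lemma sum_scale_avg: "(\<Sum>i<r. v i) = real r *\<^sub>R avg v"
  unfolding avg_def using r0 by simp

lemma T_ineq:
  "PN (\<lambda>i. T a i - T b i) \<le> PN (\<lambda>i. a i - b i) - 4 * \<beta> * (1 - \<beta>) * real r * (norm (avg a - avg b))\<^sup>2"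
proof -
  define dp where "dp = avg a - avg b"
  have "PN (\<lambda>i. T a i - T b i) \<le> (\<Sum>i<r. (norm ((2 * \<beta>) *\<^sub>R dp - (a i - b i)))\<^sup>2)"
    unfolding PN_def
  proof (intro sum_mono)
    fix i assume "i \<in> {..<r}"
    then have i: "i < r" by simp
    have eqn: "(2 * \<beta>) *\<^sub>R avg a - a i - ((2 * \<beta>) *\<^sub>R avg b - b i) = (2 * \<beta>) *\<^sub>R dp - (a i - b i)"
      unfolding dp_def by (simp add: algebra_simps)
    show "(norm (T a i - T b i))\<^sup>2 \<le> (norm ((2 * \<beta>) *\<^sub>R dp - (a i - b i)))\<^sup>2"
      using N_nonexp[OF i, of "(2 * \<beta>) *\<^sub>R avg a - a i" "(2 * \<beta>) *\<^sub>R avg b - b i"] unfolding T_def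
      by (simp only: eqn)
  qed
  also have "\<dots> = (\<Sum>i<r. 4 * \<beta>\<^sup>2 * (norm dp)\<^sup>2 - 4 * \<beta> * (dp \<bullet> (a i - b i)) + (norm (a i - b i))\<^sup>2)"
    unfolding power2_norm_eq_inner by (intro sum.cong refl) (simp add: inner_simps inner_commute power2_eq_square algebra_simps)
  also have "\<dots> = (\<Sum>i<r. 4 * \<beta>\<^sup>2 * (norm dp)\<^sup>2) - (\<Sum>i<r. 4 * \<beta> * (dp \<bullet> (a i - b i))) + PN (\<lambda>i. a i - b i)"
    unfolding PN_def by (simp add: sum.distrib sum_subtractf)
  also have "(\<Sum>i<r. 4 * \<beta>\<^sup>2 * (norm dp)\<^sup>2) = real r * (4 * \<beta>\<^sup>2 * (norm dp)\<^sup>2)" by simp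
  also have "(\<Sum>i<r. 4 * \<beta> * (dp \<bullet> (a i - b i))) = 4 * \<beta> * (dp \<bullet> (\<Sum>i<r. a i - b i))"
    by (simp add: sum_distrib_left inner_sum_right)
  also have "(\<Sum>i<r. a i - b i) = real r *\<^sub>R dp"
    unfolding dp_def sum_subtractf sum_scale_avg by (simp add: algebra_simps)
  also have "real r * (4 * \<beta>\<^sup>2 * (norm dp)\<^sup>2) - 4 * \<beta> * (dp \<bullet> (real r *\<^sub>R dp)) + PN (\<lambda>i. a i - b i)
      = PN (\<lambda>i. a i - b i) - 4 * \<beta> * (1 - \<beta>) * real r * (norm dp)\<^sup>2"
  proof -
    have "dp \<bullet> (real r *\<^sub>R dp) = real r * (norm dp)\<^sup>2" by (simp add: power2_norm_eq_inner)
    then show ?thesis by (simp add: power2_eq_square algebra_simps) (metis)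
  qed
  finally show ?thesis unfolding dp_def .
qed

lemma avg_cong: "(\<And>j. j < r \<Longrightarrow> a j = b j) \<Longrightarrow> avg a = avg b"
  unfolding avg_def by (metis lessThan_iff sum.cong)

lemma T_cong: "(\<And>j. j < r \<Longrightarrow> a j = b j) \<Longrightarrow> i < r \<Longrightarrow> T a i = T b i"
  unfolding T_def using avg_cong by metis

end

context setting begin

definition D where "D n = PN (\<lambda>i. T (X n) i - X n i)"
definition \<kappa> where "\<kappa> = 4 * \<beta> * (1 - \<beta>) * real r"
definition pbar where "pbar = resolvent SQ q - q"

lemma kappa_pos: "\<kappa> > 0" unfolding \<kappa>_def using beta r0 by simp

lemma lam0: "0 \<le> lam n" and lam1: "lam n \<le> 1" using lam by auto

lemma p_avg: "p n = avg (X n)" unfolding p avg_def X_def ..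

lemma X_eq: "X n = (\<lambda>i. x i n)" by (simp add: X_def fun_eq_iff)

lemma X_step: "i < r \<Longrightarrow> X (Suc n) i = (1 - lam n) *\<^sub>R X n i + lam n *\<^sub>R T (X n) i"
  unfolding T_def J_def using iter[of i n] p_avg[of n] by (simp add: X_def X_eq)

lemma PN_nonneg: "0 \<le> PN v" unfolding PN_def by (simp add: sum_nonneg)

lemma PN_comp: "i < r \<Longrightarrow> (norm (v i))\<^sup>2 \<le> PN v"
  unfolding PN_def by (rule member_le_sum) auto

lemma D_nonneg: "0 \<le> D n" unfolding D_def by (rule PN_nonneg)

lemma Fx_char: "Fx v \<longleftrightarrow> (\<forall>i<r. J i ((2 * \<beta>) *\<^sub>R avg v - v i) = avg v)"
proof -
  have "T v i = v i \<longleftrightarrow> J i ((2 * \<beta>) *\<^sub>R avg v - v i) = avg v" for i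
  proof -
    have "T v i = v i \<longleftrightarrow> (2 * \<beta>) *\<^sub>R J i ((2 * \<beta>) *\<^sub>R avg v - v i) = (2 * \<beta>) *\<^sub>R avg v"
      unfolding T_def by (auto simp: algebra_simps)
    also have "\<dots> \<longleftrightarrow> J i ((2 * \<beta>) *\<^sub>R avg v - v i) = avg v" using beta by simp
    finally show ?thesis .
  qed
  then show ?thesis unfolding Fx_def by simp
qed

lemma SQ_mono: "monotone_op SQ"
  unfolding SQ_def
  by (rule monotone_scale_op[OF monotone_sum_op]) (use A maxmono_mono cc_pos in auto)

lemma SQ_uniq:
  assumes "q - w1 \<in> SQ w1" "q - w2 \<in> SQ w2"
  shows "w1 = w2"
proof -
  have "0 \<le> (w1 - w2) \<bullet> ((q - w1) - (q - w2))" using SQ_mono assms unfolding monotone_op_def by blast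
  then have "(w1 - w2) \<bullet> (w1 - w2) \<le> 0" by (simp add: inner_diff_right inner_commute algebra_simps)
  then show ?thesis by (metis eq_iff_diff_eq_0 inner_gt_zero_iff not_le)
qed

lemma JQ_char: "q - w \<in> SQ w \<Longrightarrow> resolvent SQ q = w"
  by (rule resolvent_eq) (use SQ_uniq in auto)

lemma fix_avg:
  assumes F: "Fx v"
  shows "avg v = pbar"
proof -
  define P where "P = avg v"
  have "\<forall>i<r. \<exists>u. u \<in> A i (P + q) \<and> ((2 * \<beta>) *\<^sub>R P - v i) - P = \<gamma> *\<^sub>R u"
  proof (intro allI impI)
    fix i assume i: "i < r"
    have "J i ((2 * \<beta>) *\<^sub>R P - v i) = P" using F i unfolding Fx_char P_def by blast
    then show "\<exists>u. u \<in> A i (P + q) \<and> ((2 * \<beta>) *\<^sub>R P - v i) - P = \<gamma> *\<^sub>R u"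
      using J_rel[OF i, of "(2 * \<beta>) *\<^sub>R P - v i"] by auto
  qed
  then obtain u where u: "\<And>i. i < r \<Longrightarrow> u i \<in> A i (P + q)"
    "\<And>i. i < r \<Longrightarrow> ((2 * \<beta>) *\<^sub>R P - v i) - P = \<gamma> *\<^sub>R u i" by metis
  have "\<gamma> *\<^sub>R (\<Sum>i<r. u i) = (\<Sum>i<r. ((2 * \<beta>) *\<^sub>R P - v i) - P)"
    by (simp add: scaleR_sum_right u(2))
  also have "\<dots> = real r *\<^sub>R ((2 * \<beta>) *\<^sub>R P) - real r *\<^sub>R P - real r *\<^sub>R P"
    by (simp add: sum_subtractf sum_scale_avg[of v] P_def sum_constant_scaleR)
  also have "\<dots> = (- 2 * real r * (1 - \<beta>)) *\<^sub>R P" by (simp add: algebra_simps) (metis mult_2_right scaleR_add_left)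
  finally have e: "\<gamma> *\<^sub>R (\<Sum>i<r. u i) = (- 2 * real r * (1 - \<beta>)) *\<^sub>R P" .
  have "cc *\<^sub>R (\<Sum>i<r. u i) = (1 / (2 * real r * (1 - \<beta>))) *\<^sub>R (\<gamma> *\<^sub>R (\<Sum>i<r. u i))"
    unfolding cc_def by simp
  also have "\<dots> = - P" unfolding e using r0 beta by simp
  finally have "q - (P + q) = cc *\<^sub>R (\<Sum>i<r. u i)" by simp
  moreover have "(\<Sum>i<r. u i) \<in> sum_op r A (P + q)" unfolding sum_op_def using u(1) by blast
  ultimately have "q - (P + q) \<in> SQ (P + q)" unfolding SQ_def scale_op_def by blast
  then have "resolvent SQ q = P + q" by (rule JQ_char)
  then show ?thesis unfolding pbar_def P_def by simp
qed

lemma exists_fix: "\<exists>v. Fx v"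
proof -
  from q obtain y0 u0 where yu: "q = y0 + u0" "u0 \<in> SQ y0" unfolding ran_id_plus_def SQ_def cc_def by blast
  then obtain s where s: "u0 = cc *\<^sub>R s" "s \<in> sum_op r A y0" unfolding SQ_def scale_op_def by blast
  then obtain us where us: "s = (\<Sum>i<r. us i)" "\<And>i. i < r \<Longrightarrow> us i \<in> A i y0" unfolding sum_op_def by blast
  define P where "P = y0 - q"
  define v where "v i = (2 * \<beta> - 1) *\<^sub>R P - \<gamma> *\<^sub>R us i" for i
  have "cc *\<^sub>R (\<Sum>i<r. us i) = - P" using yu(1) s(1) us(1) unfolding P_def by simp
  then have "(1 / (2 * real r * (1 - \<beta>))) *\<^sub>R (\<gamma> *\<^sub>R (\<Sum>i<r. us i)) = - P" unfolding cc_def by simp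
  then have h: "(1 / (2 * real r * (1 - \<beta>))) *\<^sub>R (\<gamma> *\<^sub>R (\<Sum>i<r. us i)) = - P" .
  have "\<gamma> *\<^sub>R (\<Sum>i<r. us i) = (2 * real r * (1 - \<beta>)) *\<^sub>R ((1 / (2 * real r * (1 - \<beta>))) *\<^sub>R (\<gamma> *\<^sub>R (\<Sum>i<r. us i)))"
    using r0 beta by simp
  also have "\<dots> = (2 * real r * (1 - \<beta>)) *\<^sub>R (- P)" by (simp only: h)
  finally have g: "\<gamma> *\<^sub>R (\<Sum>i<r. us i) = (- 2 * real r * (1 - \<beta>)) *\<^sub>R P" by simp
  have "(\<Sum>i<r. v i) = real r *\<^sub>R ((2 * \<beta> - 1) *\<^sub>R P) - \<gamma> *\<^sub>R (\<Sum>i<r. us i)"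
    unfolding v_def by (simp add: sum_subtractf scaleR_sum_right sum_constant_scaleR)
  also have "\<dots> = real r *\<^sub>R P" unfolding g by (simp add: algebra_simps) (metis mult_2_right scaleR_add_left)
  finally have av: "avg v = P" unfolding avg_def using r0 by simp
  have "Fx v" unfolding Fx_char
  proof (intro allI impI)
    fix i assume i: "i < r"
    have "us i \<in> A i (P + q)" using us(2)[OF i] unfolding P_def by simp
    moreover have "((2 * \<beta>) *\<^sub>R P - v i) - P = \<gamma> *\<^sub>R us i" unfolding v_def by (simp add: algebra_simps)
    ultimately show "J i ((2 * \<beta>) *\<^sub>R avg v - v i) = avg v" unfolding av by (rule J_eq[OF i])
  qed
  then show ?thesis by blast
qed

lemma step_ineq:
  assumes F: "Fx v"
  shows "PN (\<lambda>i. X (Suc n) i - v i) \<le> PN (\<lambda>i. X n i - v i) - lam n * (1 - lam n) * D n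
           - lam n * \<kappa> * (norm (p n - pbar))\<^sup>2"
proof -
  have Tv: "\<And>i. i < r \<Longrightarrow> T v i = v i" using F unfolding Fx_def by blast
  have each: "(norm (X (Suc n) i - v i))\<^sup>2 = (1 - lam n) * (norm (X n i - v i))\<^sup>2
      + lam n * (norm (T (X n) i - T v i))\<^sup>2 - lam n * (1 - lam n) * (norm (T (X n) i - X n i))\<^sup>2"
    if i: "i < r" for i
  proof -
    have "X (Suc n) i - v i = (1 - lam n) *\<^sub>R (X n i - v i) + lam n *\<^sub>R (T (X n) i - T v i)"
      unfolding X_step[OF i] Tv[OF i] by (simp add: algebra_simps)
    moreover have "(X n i - v i) - (T (X n) i - T v i) = - (T (X n) i - X n i)"
      unfolding Tv[OF i] by simp
    ultimately show ?thesis using km_id[of "lam n" "X n i - v i" "T (X n) i - T v i"]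
      by (simp only: norm_minus_cancel)
  qed
  have "PN (\<lambda>i. X (Suc n) i - v i) = (\<Sum>i<r. (1 - lam n) * (norm (X n i - v i))\<^sup>2
      + lam n * (norm (T (X n) i - T v i))\<^sup>2 - lam n * (1 - lam n) * (norm (T (X n) i - X n i))\<^sup>2)"
    unfolding PN_def by (rule sum.cong) (auto simp: each)
  also have "\<dots> = (1 - lam n) * PN (\<lambda>i. X n i - v i) + lam n * PN (\<lambda>i. T (X n) i - T v i) - lam n * (1 - lam n) * D n"
    unfolding PN_def D_def by (simp add: sum.distrib sum_subtractf sum_distrib_left)
  also have "\<dots> \<le> (1 - lam n) * PN (\<lambda>i. X n i - v i) + lam n * (PN (\<lambda>i. X n i - v i) - \<kappa> * (norm (avg (X n) - avg v))\<^sup>2) - lam n * (1 - lam n) * D n"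
    using T_ineq[of "X n" v] lam0[of n] unfolding \<kappa>_def by (simp add: mult_left_mono)
  finally show ?thesis unfolding p_avg fix_avg[OF F] by (simp add: algebra_simps)
qed

lemma E_dec: "Fx v \<Longrightarrow> PN (\<lambda>i. X (Suc n) i - v i) \<le> PN (\<lambda>i. X n i - v i)"
proof -
  assume F: "Fx v"
  have "0 \<le> lam n * (1 - lam n) * D n" using lam0[of n] lam1[of n] D_nonneg by simp
  moreover have "0 \<le> lam n * \<kappa> * (norm (p n - pbar))\<^sup>2" using lam0[of n] kappa_pos by simp
  ultimately show ?thesis using step_ineq[OF F, of n] by linarith
qed

lemma E_le0: "Fx v \<Longrightarrow> PN (\<lambda>i. X n i - v i) \<le> PN (\<lambda>i. X 0 i - v i)"
  by (induction n) (auto intro: order_trans[OF E_dec])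

lemma sums_bound:
  assumes F: "Fx v"
  shows "(\<Sum>k<n. lam k * (1 - lam k) * D k + lam k * \<kappa> * (norm (p k - pbar))\<^sup>2) \<le> PN (\<lambda>i. X 0 i - v i) - PN (\<lambda>i. X n i - v i)"
proof (induction n)
  case 0 then show ?case by simp
next
  case (Suc n) then show ?case using step_ineq[OF F, of n] by simp
qed

definition xbar where "xbar = (SOME v. Fx v)"
lemma xbar: "Fx xbar" unfolding xbar_def using exists_fix someI_ex by metis

definition E0 where "E0 = PN (\<lambda>i. X 0 i - xbar i)"

lemma summable_D: "summable (\<lambda>k. lam k * (1 - lam k) * D k)"
  and summable_p: "summable (\<lambda>k. lam k * (norm (p k - pbar))\<^sup>2)"
proof -
  have nn1: "0 \<le> lam k * (1 - lam k) * D k" for k using lam0[of k] lam1[of k] D_nonneg by simp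
  have nn2: "0 \<le> lam k * \<kappa> * (norm (p k - pbar))\<^sup>2" for k using lam0[of k] kappa_pos by simp
  have b: "(\<Sum>k<n. lam k * (1 - lam k) * D k + lam k * \<kappa> * (norm (p k - pbar))\<^sup>2) \<le> E0" for n
    using sums_bound[OF xbar, of n] PN_nonneg[of "\<lambda>i. X n i - xbar i"] unfolding E0_def by linarith
  have "(\<Sum>k<n. lam k * (1 - lam k) * D k) \<le> E0" for n
    using b[of n] sum_mono[of "{..<n}" "\<lambda>k. lam k * (1 - lam k) * D k" "\<lambda>k. lam k * (1 - lam k) * D k + lam k * \<kappa> * (norm (p k - pbar))\<^sup>2"] nn2
    by fastforce
  then show "summable (\<lambda>k. lam k * (1 - lam k) * D k)" using nn1 by (intro summableI_nonneg_bounded)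
  have "(\<Sum>k<n. lam k * \<kappa> * (norm (p k - pbar))\<^sup>2) \<le> E0" for n
    using b[of n] sum_mono[of "{..<n}" "\<lambda>k. lam k * \<kappa> * (norm (p k - pbar))\<^sup>2" "\<lambda>k. lam k * (1 - lam k) * D k + lam k * \<kappa> * (norm (p k - pbar))\<^sup>2"] nn1
    by fastforce
  then have "summable (\<lambda>k. lam k * \<kappa> * (norm (p k - pbar))\<^sup>2)" using nn2 by (intro summableI_nonneg_bounded)
  then have "summable (\<lambda>k. (lam k * \<kappa> * (norm (p k - pbar))\<^sup>2) / \<kappa>)" by (rule summable_divide)
  then show "summable (\<lambda>k. lam k * (norm (p k - pbar))\<^sup>2)" using kappa_pos by simp
qed

end

context setting begin

lemma X_diff: "i < r \<Longrightarrow> X (Suc n) i - X n i = lam n *\<^sub>R (T (X n) i - X n i)"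
  using X_step[of i n] by (simp add: algebra_simps)

lemma D_dec: "D (Suc n) \<le> D n"
proof (cases "lam n = 0")
  case True
  then have eq: "\<And>j. j < r \<Longrightarrow> X (Suc n) j = X n j" using X_step by simp
  have "D (Suc n) = D n" unfolding D_def PN_def
    by (rule sum.cong) (auto simp: eq T_cong[OF eq])
  then show ?thesis by simp
next
  case False
  then have l: "lam n > 0" using lam0[of n] by simp
  define e where "e = (\<lambda>i. T (X n) i - X n i)"
  define f where "f = (\<lambda>i. T (X (Suc n)) i - T (X n) i)"
  define u where "u = (\<lambda>i. (1 / lam n) *\<^sub>R f i)"
  have fi: "f i = lam n *\<^sub>R u i" for i unfolding u_def using l by simp
  have dec: "T (X (Suc n)) i - X (Suc n) i = (1 - lam n) *\<^sub>R e i + lam n *\<^sub>R u i" if i: "i < r" for i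
    unfolding fi[symmetric] unfolding f_def e_def X_step[OF i] by (simp add: algebra_simps)
  have "D (Suc n) \<le> (\<Sum>i<r. (1 - lam n) * (norm (e i))\<^sup>2 + lam n * (norm (u i))\<^sup>2)"
    unfolding D_def PN_def
  proof (rule sum_mono)
    fix i assume "i \<in> {..<r}"
    then have i: "i < r" by simp
    have "0 \<le> lam n * (1 - lam n) * (norm (e i - u i))\<^sup>2" using l lam1[of n] by simp
    then show "(norm (T (X (Suc n)) i - X (Suc n) i))\<^sup>2 \<le> (1 - lam n) * (norm (e i))\<^sup>2 + lam n * (norm (u i))\<^sup>2"
      unfolding dec[OF i] km_id by linarith
  qed
  also have "\<dots> = (1 - lam n) * D n + lam n * PN u"
    unfolding D_def PN_def e_def by (simp add: sum.distrib sum_distrib_left)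
  also have "PN u \<le> D n"
  proof -
    have "0 \<le> \<kappa> * (norm (avg (X (Suc n)) - avg (X n)))\<^sup>2" using kappa_pos by simp
    then have "PN f \<le> PN (\<lambda>i. X (Suc n) i - X n i)"
      using T_ineq[of "X (Suc n)" "X n"] unfolding f_def \<kappa>_def by linarith
    also have "PN (\<lambda>i. X (Suc n) i - X n i) = (lam n)\<^sup>2 * D n"
      unfolding PN_def D_def sum_distrib_left
    proof (rule sum.cong)
      fix i assume "i \<in> {..<r}"
      then have i: "i < r" by simp
      have "(norm (X (Suc n) i - X n i))\<^sup>2 = (norm (lam n *\<^sub>R (T (X n) i - X n i)))\<^sup>2" by (simp only: X_diff[OF i])
      also have "\<dots> = (lam n)\<^sup>2 * (norm (T (X n) i - X n i))\<^sup>2" by (simp only: norm_scaleR power_mult_distrib power2_abs)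
      finally show "(norm (X (Suc n) i - X n i))\<^sup>2 = (lam n)\<^sup>2 * (norm (T (X n) i - X n i))\<^sup>2" .
    qed simp
    finally have "PN f \<le> (lam n)\<^sup>2 * D n" .
    moreover have "PN f = (lam n)\<^sup>2 * PN u"
      unfolding PN_def fi sum_distrib_left by (simp add: power_mult_distrib)
    ultimately show ?thesis using l by simp
  qed
  then have "(1 - lam n) * D n + lam n * PN u \<le> (1 - lam n) * D n + lam n * D n"
    using l by simp
  finally show ?thesis by (simp add: algebra_simps)
qed

lemma D_decseq: "decseq D" by (rule decseq_SucI) (rule D_dec)

lemma D_le0: "D n \<le> D 0" using decseqD[OF D_decseq] by simp

lemma D_lim: "D \<longlonglongrightarrow> 0"
proof (rule LIMSEQ_I)
  fix e :: real assume e: "0 < e"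
  have "\<exists>N. D N < e"
  proof (rule ccontr)
    assume "\<not> (\<exists>N. D N < e)"
    then have ge: "\<And>n. e \<le> D n" by (simp add: not_less)
    have "summable (\<lambda>k. lam k * (1 - lam k) * D k / e)" using summable_D by (rule summable_divide)
    moreover have "norm (lam k * (1 - lam k)) \<le> lam k * (1 - lam k) * D k / e" for k
    proof -
      have nn: "0 \<le> lam k * (1 - lam k)" using lam0[of k] lam1[of k] by simp
      have "lam k * (1 - lam k) * 1 \<le> lam k * (1 - lam k) * (D k / e)"
        using ge[of k] e nn by (intro mult_left_mono) auto
      then show ?thesis using nn by simp
    qed
    ultimately have "summable (\<lambda>k. lam k * (1 - lam k))" by (rule summable_comparison_test')
    then show False using lamsum by simp
  qed
  then obtain N where N: "D N < e" by blast
  show "\<exists>N. \<forall>n\<ge>N. norm (D n - 0) < e"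
  proof (intro exI allI impI)
    fix n assume "N \<le> n"
    then have "D n \<le> D N" using decseqD[OF D_decseq] by blast
    then show "norm (D n - 0) < e" using N D_nonneg[of n] by simp
  qed
qed

lemma comp_le_D: "i < r \<Longrightarrow> norm (T (X n) i - X n i) \<le> sqrt (D n)"
  unfolding D_def by (intro real_le_rsqrt PN_comp)

lemma part_i: "i < r \<Longrightarrow> (\<lambda>n. x i (Suc n) - x i n) \<longlonglongrightarrow> 0"
proof -
  assume i: "i < r"
  have "norm (x i (Suc n) - x i n) \<le> sqrt (D n)" for n
  proof -
    have "x i (Suc n) - x i n = lam n *\<^sub>R (T (X n) i - X n i)"
      using X_diff[OF i, of n] unfolding X_def .
    then have "norm (x i (Suc n) - x i n) = lam n * norm (T (X n) i - X n i)" using lam0[of n] by simp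
    also have "\<dots> \<le> 1 * norm (T (X n) i - X n i)" using lam1[of n] by (intro mult_right_mono) auto
    finally show ?thesis using comp_le_D[OF i, of n] by simp
  qed
  moreover have "(\<lambda>n. sqrt (D n)) \<longlonglongrightarrow> 0" using tendsto_real_sqrt[OF D_lim] by simp
  ultimately show ?thesis using Lim_null_comparison[of "\<lambda>n. x i (Suc n) - x i n" "\<lambda>n. sqrt (D n)" sequentially]
    by (simp add: always_eventually)
qed

lemma lam_not_summable: "\<not> summable lam"
proof
  assume s: "summable lam"
  have nr: "norm (lam k * (1 - lam k)) \<le> lam k" for k
  proof -
    have "lam k * (1 - lam k) \<le> lam k * 1" using lam0[of k] lam1[of k] by (intro mult_left_mono) auto
    moreover have "0 \<le> lam k * (1 - lam k)" using lam0[of k] lam1[of k] by simp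
    ultimately show ?thesis by simp
  qed
  have "summable (\<lambda>k. lam k * (1 - lam k))"
    by (rule summable_comparison_test'[where N=0, OF s]) (rule nr)
  then show False using lamsum by simp
qed

lemma p_lim: "p \<longlonglongrightarrow> pbar"
proof -
  define b where "b n = norm (p n - pbar)" for n
  have step: "\<bar>b (Suc n) - b n\<bar> \<le> sqrt (D 0) * lam n" for n
  proof -
    have "\<bar>b (Suc n) - b n\<bar> \<le> norm (p (Suc n) - p n)"
      unfolding b_def using norm_triangle_ineq3[of "p (Suc n) - pbar" "p n - pbar"] by simp
    also have "p (Suc n) - p n = (1 / real r) *\<^sub>R (\<Sum>i<r. lam n *\<^sub>R (T (X n) i - X n i))"
    proof -
      have "(\<Sum>i<r. X (Suc n) i) - (\<Sum>i<r. X n i) = (\<Sum>i<r. lam n *\<^sub>R (T (X n) i - X n i))"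
        unfolding sum_subtractf[symmetric] by (rule sum.cong) (simp_all only: X_diff lessThan_iff)
      moreover have "p (Suc n) - p n = (1 / real r) *\<^sub>R ((\<Sum>i<r. X (Suc n) i) - (\<Sum>i<r. X n i))"
        unfolding p_avg avg_def by (simp only: scaleR_diff_right)
      ultimately show ?thesis by simp
    qed
    also have "norm \<dots> \<le> lam n * sqrt (D n)"
    proof -
      have "norm (\<Sum>i<r. lam n *\<^sub>R (T (X n) i - X n i)) \<le> (\<Sum>i<r. norm (lam n *\<^sub>R (T (X n) i - X n i)))"
        by (rule norm_sum)
      also have "\<dots> \<le> (\<Sum>i<r. lam n * sqrt (D n))"
        using comp_le_D lam0[of n] by (intro sum_mono) (auto intro: mult_left_mono)
      also have "\<dots> = real r * (lam n * sqrt (D n))" by simp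
      finally have "(1 / real r) * norm (\<Sum>i<r. lam n *\<^sub>R (T (X n) i - X n i)) \<le> (1 / real r) * (real r * (lam n * sqrt (D n)))"
        using r0 by (intro mult_left_mono) auto
      then show ?thesis using r0 by simp
    qed
    also have "\<dots> \<le> lam n * sqrt (D 0)" using D_le0[of n] lam0[of n] by (intro mult_left_mono) auto
    finally show ?thesis by (simp add: mult.commute)
  qed
  have "b \<longlonglongrightarrow> 0"
    by (rule RL[OF _ lam0 step _ lam_not_summable]) (use summable_p in \<open>auto simp: b_def\<close>)
  then have "(\<lambda>n. p n - pbar) \<longlonglongrightarrow> 0" unfolding b_def by (rule tendsto_norm_zero_cancel)
  then show ?thesis by (rule LIM_zero_cancel)
qed

definition Bx where "Bx = (\<Sum>i<r. norm (xbar i)) + sqrt E0"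

lemma x_bound: "i < r \<Longrightarrow> norm (x i n) \<le> Bx"
proof -
  assume i: "i < r"
  have "(norm (X n i - xbar i))\<^sup>2 \<le> E0"
    using PN_comp[OF i, of "\<lambda>i. X n i - xbar i"] E_le0[OF xbar, of n] unfolding E0_def by simp
  then have "norm (x i n - xbar i) \<le> sqrt E0" unfolding X_def by (rule real_le_rsqrt)
  moreover have "norm (xbar i) \<le> (\<Sum>i<r. norm (xbar i))" using i by (intro member_le_sum) auto
  moreover have "norm (x i n) \<le> norm (x i n - xbar i) + norm (xbar i)" by (metis add.commute norm_triangle_sub)
  ultimately show ?thesis unfolding Bx_def by linarith
qed

end

context setting begin

lemma TX_minus: "i < r \<Longrightarrow> T (X n) i - X n i = (2 * \<beta>) *\<^sub>R (J i ((2 * \<beta>) *\<^sub>R p n - x i n) - p n)"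
  unfolding T_def p_avg X_def by (simp add: algebra_simps)

lemma p_bound: "norm (p n) \<le> Bx"
proof -
  have "norm (p n) \<le> (1 / real r) * (\<Sum>i<r. norm (x i n))"
    unfolding p using norm_sum[of "\<lambda>i. x i n" "{..<r}"] r0 by (simp add: divide_right_mono)
  also have "\<dots> \<le> (1 / real r) * (\<Sum>i<r. Bx)"
    using x_bound r0 by (intro mult_left_mono sum_mono) auto
  also have "\<dots> = Bx" using r0 by simp
  finally show ?thesis .
qed

lemma inner_lim_sum:
  assumes "\<And>i. i < r \<Longrightarrow> (\<lambda>n. f i n \<bullet> z) \<longlonglongrightarrow> g i \<bullet> z"
  shows "(\<lambda>n. (\<Sum>i<r. f i n) \<bullet> z) \<longlonglongrightarrow> (\<Sum>i<r. g i) \<bullet> z"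
  unfolding inner_sum_left using assms by (intro tendsto_sum) auto

lemma cluster_fix:
  assumes \<sigma>: "strict_mono \<sigma>" and w: "\<And>i. i < r \<Longrightarrow> weak_conv (\<lambda>n. x i (\<sigma> n)) (L i)"
  shows "Fx L"
proof -
  have pl: "(\<lambda>n. p (\<sigma> n)) \<longlonglongrightarrow> pbar" using LIMSEQ_subseq_LIMSEQ[OF p_lim \<sigma>] by (simp add: o_def)
  have avgL: "avg L = pbar"
  proof -
    have "avg L \<bullet> z = pbar \<bullet> z" for z
    proof -
      have "(\<lambda>n. (\<Sum>i<r. x i (\<sigma> n)) \<bullet> z) \<longlonglongrightarrow> (\<Sum>i<r. L i) \<bullet> z"
        using w unfolding weak_conv_def by (intro inner_lim_sum) auto
      then have "(\<lambda>n. (1 / real r) * ((\<Sum>i<r. x i (\<sigma> n)) \<bullet> z)) \<longlonglongrightarrow> (1 / real r) * ((\<Sum>i<r. L i) \<bullet> z)"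
        by (rule tendsto_mult_left)
      then have "(\<lambda>n. p (\<sigma> n) \<bullet> z) \<longlonglongrightarrow> avg L \<bullet> z" unfolding p avg_def by simp
      moreover have "(\<lambda>n. p (\<sigma> n) \<bullet> z) \<longlonglongrightarrow> pbar \<bullet> z" by (intro tendsto_intros pl)
      ultimately show ?thesis using LIMSEQ_unique by blast
    qed
    then have "(avg L - pbar) \<bullet> (avg L - pbar) = 0" by (simp add: inner_diff_left)
    then show ?thesis by simp
  qed
  have "J i ((2 * \<beta>) *\<^sub>R avg L - L i) = avg L" if i: "i < r" for i
  proof -
    define j where "j n = J i ((2 * \<beta>) *\<^sub>R p n - x i n)" for n
    define u where "u n = (1 / \<gamma>) *\<^sub>R (((2 * \<beta>) *\<^sub>R p n - x i n) - j n)" for n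
    have umem: "u n \<in> A i (j n + q)" for n
    proof -
      obtain v where v: "v \<in> A i (j n + q)" "((2 * \<beta>) *\<^sub>R p n - x i n) - j n = \<gamma> *\<^sub>R v"
        using J_rel[OF i, of "(2 * \<beta>) *\<^sub>R p n - x i n"] unfolding j_def by blast
      have "u n = v" unfolding u_def v(2) using gamma by simp
      then show ?thesis using v(1) by simp
    qed
    have jp: "norm (j n - p n) \<le> sqrt (D n) / (2 * \<beta>)" for n
    proof -
      have "norm ((2 * \<beta>) *\<^sub>R (j n - p n)) \<le> sqrt (D n)"
        using comp_le_D[OF i, of n] unfolding TX_minus[OF i] j_def .
      moreover have "norm ((2 * \<beta>) *\<^sub>R (j n - p n)) = (2 * \<beta>) * norm (j n - p n)" using beta by simp
      ultimately have h: "(2 * \<beta>) * norm (j n - p n) \<le> sqrt (D n)" by linarith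
      have "norm (j n - p n) = ((2 * \<beta>) * norm (j n - p n)) / (2 * \<beta>)" using beta by simp
      also have "\<dots> \<le> sqrt (D n) / (2 * \<beta>)" using h beta by (intro divide_right_mono) auto
      finally show ?thesis .
    qed
    have jp0: "(\<lambda>n. j n - p n) \<longlonglongrightarrow> 0"
    proof -
      have "(\<lambda>n. sqrt (D n) / (2 * \<beta>)) \<longlonglongrightarrow> 0" using tendsto_real_sqrt[OF D_lim] by (auto intro: tendsto_divide_zero)
      then show ?thesis using jp Lim_null_comparison[of "\<lambda>n. j n - p n" "\<lambda>n. sqrt (D n) / (2 * \<beta>)" sequentially]
        by (simp add: always_eventually)
    qed
    have jl: "j \<longlonglongrightarrow> pbar" using tendsto_add[OF jp0 p_lim] by simp
    have jsl: "(\<lambda>n. j (\<sigma> n) + q) \<longlonglongrightarrow> pbar + q"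
      using LIMSEQ_subseq_LIMSEQ[OF jl \<sigma>] by (auto intro: tendsto_add simp: o_def)
    define ustar where "ustar = (1 / \<gamma>) *\<^sub>R (((2 * \<beta>) *\<^sub>R pbar - L i) - pbar)"
    have uw: "weak_conv (\<lambda>n. u (\<sigma> n)) ustar"
      unfolding weak_conv_def
    proof
      fix z
      have a: "(\<lambda>n. x i (\<sigma> n) \<bullet> z) \<longlonglongrightarrow> L i \<bullet> z" using w[OF i] unfolding weak_conv_def by blast
      have b: "(\<lambda>n. p (\<sigma> n) \<bullet> z) \<longlonglongrightarrow> pbar \<bullet> z" by (intro tendsto_intros pl)
      have c: "(\<lambda>n. j (\<sigma> n) \<bullet> z) \<longlonglongrightarrow> pbar \<bullet> z"
        using LIMSEQ_subseq_LIMSEQ[OF jl \<sigma>] by (auto intro: tendsto_intros simp: o_def)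
      have "(\<lambda>n. (1 / \<gamma>) * ((2 * \<beta>) * (p (\<sigma> n) \<bullet> z) - x i (\<sigma> n) \<bullet> z - j (\<sigma> n) \<bullet> z))
          \<longlonglongrightarrow> (1 / \<gamma>) * ((2 * \<beta>) * (pbar \<bullet> z) - L i \<bullet> z - pbar \<bullet> z)"
        by (intro tendsto_intros a b c)
      then show "(\<lambda>n. u (\<sigma> n) \<bullet> z) \<longlonglongrightarrow> ustar \<bullet> z"
        unfolding u_def ustar_def by (simp add: inner_diff_left)
    qed
    define Bu where "Bu = (1 / \<gamma>) * (2 * \<beta> * Bx + Bx + (sqrt (D 0) / (2 * \<beta>) + Bx))"
    have ub: "norm (u n) \<le> Bu" for n
    proof -
      have "norm (j n) \<le> sqrt (D 0) / (2 * \<beta>) + Bx"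
      proof -
        have "norm (j n) \<le> norm (j n - p n) + norm (p n)" by (metis add.commute norm_triangle_sub)
        moreover have "sqrt (D n) / (2 * \<beta>) \<le> sqrt (D 0) / (2 * \<beta>)"
          using D_le0[of n] beta by (simp add: divide_right_mono)
        ultimately show ?thesis using jp[of n] p_bound[of n] by linarith
      qed
      moreover have "norm (((2 * \<beta>) *\<^sub>R p n - x i n) - j n) \<le> 2 * \<beta> * norm (p n) + norm (x i n) + norm (j n)"
        using beta by (smt (verit) norm_scaleR norm_triangle_ineq4 abs_of_pos mult_pos_pos zero_less_numeral)
      moreover have "2 * \<beta> * norm (p n) \<le> 2 * \<beta> * Bx" using p_bound[of n] beta by simp
      ultimately have "norm (((2 * \<beta>) *\<^sub>R p n - x i n) - j n) \<le> 2 * \<beta> * Bx + Bx + (sqrt (D 0) / (2 * \<beta>) + Bx)"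
        using x_bound[OF i, of n] by linarith
      then show ?thesis unfolding u_def Bu_def using gamma by (simp add: divide_right_mono)
    qed
    have "ustar \<in> A i (pbar + q)"
      by (rule maxmono_closed[OF A[OF i] umem jsl uw ub])
    moreover have "((2 * \<beta>) *\<^sub>R pbar - L i) - pbar = \<gamma> *\<^sub>R ustar" unfolding ustar_def using gamma by simp
    ultimately have "J i ((2 * \<beta>) *\<^sub>R pbar - L i) = pbar" by (rule J_eq[OF i])
    then show ?thesis unfolding avgL .
  qed
  then show ?thesis unfolding Fx_char by blast
qed

end

context setting begin

lemma E_conv: "Fx v \<Longrightarrow> convergent (\<lambda>n. PN (\<lambda>i. X n i - v i))"
proof -
  assume F: "Fx v"
  have "decseq (\<lambda>n. PN (\<lambda>i. X n i - v i))" by (rule decseq_SucI) (rule E_dec[OF F])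
  then obtain l where "(\<lambda>n. PN (\<lambda>i. X n i - v i)) \<longlonglongrightarrow> l"
    using decseq_convergent[of "\<lambda>n. PN (\<lambda>i. X n i - v i)" 0] PN_nonneg by blast
  then show ?thesis by (auto simp: convergent_def)
qed

lemma cluster_unique:
  assumes F1: "Fx L1" and F2: "Fx L2"
    and s1: "strict_mono \<sigma>1" and w1: "\<And>i. i < r \<Longrightarrow> weak_conv (\<lambda>n. x i (\<sigma>1 n)) (L1 i)"
    and s2: "strict_mono \<sigma>2" and w2: "\<And>i. i < r \<Longrightarrow> weak_conv (\<lambda>n. x i (\<sigma>2 n)) (L2 i)"
  shows "\<And>i. i < r \<Longrightarrow> L1 i = L2 i"
proof -
  define \<theta> where "\<theta> n = (\<Sum>i<r. x i n \<bullet> (L1 i - L2 i))" for n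
  define K where "K = (\<Sum>i<r. (norm (L2 i))\<^sup>2 - (norm (L1 i))\<^sup>2)"
  have th: "\<theta> n = (PN (\<lambda>i. X n i - L2 i) - PN (\<lambda>i. X n i - L1 i) - K) / 2" for n
  proof -
    have "PN (\<lambda>i. X n i - L2 i) - PN (\<lambda>i. X n i - L1 i) = (\<Sum>i<r. 2 * (x i n \<bullet> (L1 i - L2 i)) + ((norm (L2 i))\<^sup>2 - (norm (L1 i))\<^sup>2))"
      unfolding PN_def sum_subtractf[symmetric] X_def
      by (rule sum.cong) (simp_all add: power2_norm_eq_inner inner_simps inner_commute)
    also have "\<dots> = 2 * \<theta> n + K" unfolding \<theta>_def K_def by (simp add: sum.distrib sum_distrib_left)
    finally show ?thesis by simp
  qed
  obtain l1 where l1: "(\<lambda>n. PN (\<lambda>i. X n i - L1 i)) \<longlonglongrightarrow> l1" using E_conv[OF F1] by (auto simp: convergent_def)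
  obtain l2 where l2: "(\<lambda>n. PN (\<lambda>i. X n i - L2 i)) \<longlonglongrightarrow> l2" using E_conv[OF F2] by (auto simp: convergent_def)
  have tl: "\<theta> \<longlonglongrightarrow> (l2 - l1 - K) / 2" unfolding th[abs_def] by (intro tendsto_intros l1 l2) auto
  have a1: "(\<lambda>n. \<theta> (\<sigma>1 n)) \<longlonglongrightarrow> (\<Sum>i<r. L1 i \<bullet> (L1 i - L2 i))"
    unfolding \<theta>_def using w1 unfolding weak_conv_def by (intro tendsto_sum) auto
  have a2: "(\<lambda>n. \<theta> (\<sigma>2 n)) \<longlonglongrightarrow> (\<Sum>i<r. L2 i \<bullet> (L1 i - L2 i))"
    unfolding \<theta>_def using w2 unfolding weak_conv_def by (intro tendsto_sum) auto
  have "(\<lambda>n. \<theta> (\<sigma>1 n)) \<longlonglongrightarrow> (l2 - l1 - K) / 2" using LIMSEQ_subseq_LIMSEQ[OF tl s1] by (simp add: o_def)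
  then have e1: "(\<Sum>i<r. L1 i \<bullet> (L1 i - L2 i)) = (l2 - l1 - K) / 2" using a1 LIMSEQ_unique by blast
  have "(\<lambda>n. \<theta> (\<sigma>2 n)) \<longlonglongrightarrow> (l2 - l1 - K) / 2" using LIMSEQ_subseq_LIMSEQ[OF tl s2] by (simp add: o_def)
  then have e2: "(\<Sum>i<r. L2 i \<bullet> (L1 i - L2 i)) = (l2 - l1 - K) / 2" using a2 LIMSEQ_unique by blast
  have "(\<Sum>i<r. (L1 i - L2 i) \<bullet> (L1 i - L2 i)) = (\<Sum>i<r. L1 i \<bullet> (L1 i - L2 i)) - (\<Sum>i<r. L2 i \<bullet> (L1 i - L2 i))"
    by (simp add: inner_diff_left sum_subtractf)
  also have "\<dots> = 0" using e1 e2 by simp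
  finally have z: "(\<Sum>i<r. (L1 i - L2 i) \<bullet> (L1 i - L2 i)) = 0" .
  have "\<forall>i\<in>{..<r}. (L1 i - L2 i) \<bullet> (L1 i - L2 i) = 0"
    using z by (subst sum_nonneg_eq_0_iff[symmetric]) auto
  then show "\<And>i. i < r \<Longrightarrow> L1 i = L2 i" by simp
qed

lemma part_ii: "\<exists>xs. (\<forall>i<r. weak_conv (\<lambda>n. x i n) (xs i)) \<and> avg xs = pbar"
proof -
  obtain \<sigma> L where \<sigma>: "strict_mono \<sigma>" "\<forall>i<r. weak_conv (\<lambda>n. x i (\<sigma> n)) (L i)"
    using weak_subseq_family[of r x Bx] x_bound by blast
  have FL: "Fx L" using cluster_fix[OF \<sigma>(1)] \<sigma>(2) by blast
  have "weak_conv (\<lambda>n. x i n) (L i)" if i: "i < r" for i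
    unfolding weak_conv_def
  proof (rule allI, rule ccontr)
    fix z assume nt: "\<not> (\<lambda>n. x i n \<bullet> z) \<longlonglongrightarrow> L i \<bullet> z"
    then obtain e where e: "e > 0" and fr: "\<And>N. \<exists>n\<ge>N. e \<le> \<bar>x i n \<bullet> z - L i \<bullet> z\<bar>"
      unfolding LIMSEQ_iff by (force simp: not_less dist_real_def)
    define S where "S = {n. e \<le> \<bar>x i n \<bullet> z - L i \<bullet> z\<bar>}"
    have infS: "infinite S" unfolding S_def infinite_nat_iff_unbounded_le using fr by blast
    define \<tau> where "\<tau> = enumerate S"
    have \<tau>: "strict_mono \<tau>" unfolding \<tau>_def by (rule strict_monoI) (rule enumerate_mono[OF _ infS])
    have \<tau>S: "\<tau> n \<in> S" for n unfolding \<tau>_def by (rule enumerate_in_set[OF infS])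
    obtain \<sigma>' L' where \<sigma>': "strict_mono \<sigma>'" "\<forall>k<r. weak_conv (\<lambda>n. x k (\<tau> (\<sigma>' n))) (L' k)"
      using weak_subseq_family[of r "\<lambda>k n. x k (\<tau> n)" Bx] x_bound by blast
    have sm: "strict_mono (\<tau> \<circ> \<sigma>')" using \<tau> \<sigma>'(1) by (rule strict_mono_o)
    have w': "\<And>k. k < r \<Longrightarrow> weak_conv (\<lambda>n. x k ((\<tau> \<circ> \<sigma>') n)) (L' k)" using \<sigma>'(2) by simp
    have FL': "Fx L'" by (rule cluster_fix[OF sm w'])
    have eq: "L' i = L i"
      using cluster_unique[OF FL' FL sm w' \<sigma>(1)] \<sigma>(2) i by blast
    have "(\<lambda>n. x i (\<tau> (\<sigma>' n)) \<bullet> z) \<longlonglongrightarrow> L i \<bullet> z" using \<sigma>'(2) i eq unfolding weak_conv_def by auto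
    then obtain no where no: "\<forall>n\<ge>no. norm (x i (\<tau> (\<sigma>' n)) \<bullet> z - L i \<bullet> z) < e"
      using e unfolding LIMSEQ_iff by blast
    define n where "n = no"
    have "\<bar>x i (\<tau> (\<sigma>' n)) \<bullet> z - L i \<bullet> z\<bar> < e" using no unfolding n_def by auto
    moreover have "\<tau> (\<sigma>' n) \<in> S" by (rule \<tau>S)
    ultimately show False unfolding S_def by simp
  qed
  moreover have "avg L = pbar" by (rule fix_avg[OF FL])
  ultimately show ?thesis by blast
qed

lemma main:
  shows "(\<forall>i<r. (\<lambda>n. x i (Suc n) - x i n) \<longlonglongrightarrow> 0)
    \<and> (\<exists>xs. (\<forall>i<r. weak_conv (\<lambda>n. x i n) (xs i)) \<and>
         q + (1 / real r) *\<^sub>R (\<Sum>i<r. xs i)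
           = resolvent (scale_op (\<gamma> / (2 * real r * (1 - \<beta>))) (sum_op r A)) q)
    \<and> (\<lambda>n. q + p n) \<longlonglongrightarrow> resolvent (scale_op (\<gamma> / (2 * real r * (1 - \<beta>))) (sum_op r A)) q"
proof -
  have R: "resolvent (scale_op (\<gamma> / (2 * real r * (1 - \<beta>))) (sum_op r A)) q = q + pbar"
    unfolding pbar_def SQ_def cc_def by simp
  have "\<forall>i<r. (\<lambda>n. x i (Suc n) - x i n) \<longlonglongrightarrow> 0" using part_i by blast
  moreover have "\<exists>xs. (\<forall>i<r. weak_conv (\<lambda>n. x i n) (xs i)) \<and>
         q + (1 / real r) *\<^sub>R (\<Sum>i<r. xs i) = resolvent (scale_op (\<gamma> / (2 * real r * (1 - \<beta>))) (sum_op r A)) q"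
    using part_ii unfolding R avg_def by auto
  moreover have "(\<lambda>n. q + p n) \<longlonglongrightarrow> resolvent (scale_op (\<gamma> / (2 * real r * (1 - \<beta>))) (sum_op r A)) q"
    unfolding R by (intro tendsto_intros p_lim)
  ultimately show ?thesis by blast
qed

end

theorem theorem4p3:
  fixes A :: "nat \<Rightarrow> 'a::{real_inner, complete_space} \<Rightarrow> 'a set"
    and r :: nat and \<gamma> \<beta> :: real and lam :: "nat \<Rightarrow> real"
    and q :: 'a and x :: "nat \<Rightarrow> nat \<Rightarrow> 'a" and p :: "nat \<Rightarrow> 'a"
  assumes r: "r \<ge> 1"
    and A: "\<And>i. i < r \<Longrightarrow> maximal_monotone (A i)"
    and gamma: "\<gamma> > 0"
    and lam: "\<And>n. 0 \<le> lam n \<and> lam n \<le> 1"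
    and lamsum: "\<not> summable (\<lambda>n. lam n * (1 - lam n))"
    and beta: "0 < \<beta>" "\<beta> < 1"
    and q: "q \<in> ran_id_plus (scale_op (\<gamma> / (2 * real r * (1 - \<beta>))) (sum_op r A))"
    and p: "\<And>n. p n = (1 / real r) *\<^sub>R (\<Sum>i<r. x i n)"
    and iter: "\<And>n i. i < r \<Longrightarrow> x i (Suc n) =
        (1 - lam n) *\<^sub>R x i n +
        lam n *\<^sub>R ((2 * \<beta>) *\<^sub>R resolvent (scale_op \<gamma> (perturb_op (- q) (A i)))
                                 ((2 * \<beta>) *\<^sub>R p n - x i n)
                        - ((2 * \<beta>) *\<^sub>R p n - x i n))"
  shows "(\<forall>i<r. (\<lambda>n. x i (Suc n) - x i n) \<longlonglongrightarrow> 0)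
    \<and> (\<exists>xs. (\<forall>i<r. weak_conv (\<lambda>n. x i n) (xs i)) \<and>
         q + (1 / real r) *\<^sub>R (\<Sum>i<r. xs i)
           = resolvent (scale_op (\<gamma> / (2 * real r * (1 - \<beta>))) (sum_op r A)) q)
    \<and> (\<lambda>n. q + p n) \<longlonglongrightarrow> resolvent (scale_op (\<gamma> / (2 * real r * (1 - \<beta>))) (sum_op r A)) q"
proof -
  interpret setting A r \<gamma> \<beta> lam q x p
    by (unfold_locales) (use assms in auto)
  show ?thesis by (rule main)
qed

end
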